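(* Let $n\ge1$ and $a=(a_0,\dots,a_n)\in(\mathbb{R}\cup\{\infty\})^{n+1}$ with $a_0,a_n<\infty$. Then $a$ is regular if and only if $H(a)=0$. If $a$ is not regular, then $H(a)\ge 1/6$.
   Context: $a$ is regular if the set $J=\{i: a_i<\infty\}$ is an arithmetic progression and each point $(i,a_i)$, $i\in J$, is a vertex of the Newton polygon $P(a)$, which is the convex hull of the vertical rays $\{(i,b): b\ge a_i\}$, $i\in J$. For an integer $s\ge 0$ let $D_s\subset\mathbb{R}^s$ be the set of real vectors $z=(z_1,\dots,z_s)$ such that for every $0\le k\le s-1-n$ the minimum $\min_{0\le i\le n}\{a_i+z_{k+1+i}\}$ is attained for at least two different indices $i$; $D_s$ is a polyhedral complex, $d_s=\dim D_s$, and the tropical entropy is $H(a)=\lim_{s\to\infty}d_s/s$. *)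

theory Defs
  imports "HOL-Analysis.Analysis" "HOL-Library.Extended_Real"
begin

text \<open>A vector a = (a_0,...,a_n) with entries in R \<union> {\<infinity>} is modelled by
  a :: nat \<Rightarrow> ereal together with n; only a 0, ..., a n matter, and the
  entries are assumed to be different from -\<infinity>.\<close>

definition supp_idx :: "(nat \<Rightarrow> ereal) \<Rightarrow> nat \<Rightarrow> nat set" where
  "supp_idx a n = {i. i \<le> n \<and> a i < \<infinity>}"

definition arith_prog :: "nat set \<Rightarrow> bool" where
  "arith_prog J \<longleftrightarrow> (\<exists>c d m. J = {c + d * k | k. k \<le> m})"

definition newton_polygon :: "(nat \<Rightarrow> ereal) \<Rightarrow> nat \<Rightarrow> (real \<times> real) set" where
  "newton_polygon a n =
     convex hull (\<Union>i\<in>supp_idx a n. {(real i, b) | b. a i \<le> ereal b})"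

definition regular :: "(nat \<Rightarrow> ereal) \<Rightarrow> nat \<Rightarrow> bool" where
  "regular a n \<longleftrightarrow> arith_prog (supp_idx a n) \<and>
     (\<forall>i\<in>supp_idx a n. (real i, real_of_ereal (a i)) extreme_point_of newton_polygon a n)"

text \<open>Points of R^s are functions z :: nat \<Rightarrow> real with coordinates z 1, ..., z s
  and z i = 0 for i outside {1..s}.\<close>

definition Rs :: "nat \<Rightarrow> (nat \<Rightarrow> real) set" where
  "Rs s = {z. \<forall>i. i \<notin> {1..s} \<longrightarrow> z i = 0}"

definition D_set :: "(nat \<Rightarrow> ereal) \<Rightarrow> nat \<Rightarrow> nat \<Rightarrow> (nat \<Rightarrow> real) set" where
  "D_set a n s = {z \<in> Rs s. \<forall>k. k + n + 1 \<le> s \<longrightarrow>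
      (\<exists>i\<le>n. \<exists>j\<le>n. i \<noteq> j \<and>
         (\<forall>l\<le>n. a i + ereal (z (k+1+i)) \<le> a l + ereal (z (k+1+l))) \<and>
         (\<forall>l\<le>n. a j + ereal (z (k+1+j)) \<le> a l + ereal (z (k+1+l))))}"

text \<open>Dimension of a subset S of R^s (for finite unions of polyhedra, such as the
  polyhedral complex D_s, this is the usual dimension): the largest m such that S
  contains an m-dimensional simplex, i.e. p + conv{0, v_0, ..., v_(m-1)} with
  v_0, ..., v_(m-1) \<in> R^s linearly independent.\<close>

definition contains_simplex :: "nat \<Rightarrow> (nat \<Rightarrow> real) set \<Rightarrow> nat \<Rightarrow> bool" where
  "contains_simplex s S m \<longleftrightarrow> (\<exists>p v. p \<in> Rs s \<and> (\<forall>j<m. v j \<in> Rs s) \<and>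
      (\<forall>c::nat \<Rightarrow> real. (\<forall>i. (\<Sum>j<m. c j * v j i) = 0) \<longrightarrow> (\<forall>j<m. c j = 0)) \<and>
      (\<forall>t::nat \<Rightarrow> real. (\<forall>j<m. 0 \<le> t j) \<and> (\<Sum>j<m. t j) \<le> 1 \<longrightarrow>
          (\<lambda>i. p i + (\<Sum>j<m. t j * v j i)) \<in> S))"

definition set_dim :: "nat \<Rightarrow> (nat \<Rightarrow> real) set \<Rightarrow> nat" where
  "set_dim s S = Sup {m. contains_simplex s S m}"

definition d_seq :: "(nat \<Rightarrow> ereal) \<Rightarrow> nat \<Rightarrow> nat \<Rightarrow> nat" where
  "d_seq a n s = set_dim s (D_set a n s)"

definition tropical_entropy :: "(nat \<Rightarrow> ereal) \<Rightarrow> nat \<Rightarrow> real" where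
  "tropical_entropy a n = lim (\<lambda>s. real (d_seq a n s) / real s)"

end

theory Submission
  imports Defs
begin

definition indep :: "(nat \<Rightarrow> nat \<Rightarrow> real) \<Rightarrow> nat set \<Rightarrow> bool" where
  "indep v A \<longleftrightarrow> (\<forall>c. (\<forall>i. (\<Sum>j\<in>A. c j * v j i) = 0) \<longrightarrow> (\<forall>j\<in>A. c j = 0))"

lemma lin_bound:
  assumes "finite U"
  shows "finite A \<Longrightarrow> indep v A \<Longrightarrow> (\<forall>j\<in>A. \<forall>q. q \<notin> U \<longrightarrow> v j q = 0) \<Longrightarrow> card A \<le> card U"
  using assms
proof (induction U arbitrary: A v rule: finite_induct)
  case empty
  show ?case
  proof (rule ccontr)
    assume "\<not> card A \<le> card {}"
    then obtain j0 where j0: "j0 \<in> A" by fastforce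
    have "(\<forall>i. (\<Sum>j\<in>A. (\<lambda>j. if j = j0 then 1 else 0) j * v j i) = 0)"
      using empty.prems(3) by simp
    with empty.prems(2) j0 show False
      unfolding indep_def by (elim allE[of _ "\<lambda>j. if j = j0 then 1 else 0"]) auto
  qed
next
  case (insert q U')
  show ?case
  proof (cases "\<forall>j\<in>A. v j q = 0")
    case True
    have "card A \<le> card U'"
      using insert.IH[OF insert.prems(1,2)] insert.prems(3) True by (metis insert_iff)
    then show ?thesis using insert.hyps by simp
  next
    case False
    then obtain j0 where j0: "j0 \<in> A" "v j0 q \<noteq> 0" by blast
    define w where "w j i = v j i - (v j q / v j0 q) * v j0 i" for j i
    have supp: "\<forall>j\<in>A - {j0}. \<forall>i. i \<notin> U' \<longrightarrow> w j i = 0"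
    proof (intro ballI allI impI)
      fix j i assume j: "j \<in> A - {j0}" and i: "i \<notin> U'"
      show "w j i = 0"
      proof (cases "i = q")
        case True then show ?thesis using j0 by (simp add: w_def)
      next
        case False
        then have "i \<notin> insert q U'" using i by simp
        then show ?thesis using insert.prems(3) j j0 by (simp add: w_def)
      qed
    qed
    have ind: "indep w (A - {j0})"
      unfolding indep_def
    proof (intro allI impI)
      fix c assume H: "\<forall>i. (\<Sum>j\<in>A - {j0}. c j * w j i) = 0"
      define c' where "c' j = (if j = j0 then - (\<Sum>j\<in>A - {j0}. c j * v j q) / v j0 q else c j)" for j
      have "\<forall>i. (\<Sum>j\<in>A. c' j * v j i) = 0"
      proof
        fix i
        have "(\<Sum>j\<in>A. c' j * v j i) = c' j0 * v j0 i + (\<Sum>j\<in>A - {j0}. c' j * v j i)"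
          using j0 insert.prems(1) by (simp add: sum.remove)
        also have "(\<Sum>j\<in>A - {j0}. c' j * v j i) = (\<Sum>j\<in>A - {j0}. c j * v j i)"
          by (rule sum.cong) (auto simp: c'_def)
        also have "(\<Sum>j\<in>A - {j0}. c j * w j i) = (\<Sum>j\<in>A - {j0}. c j * v j i)
              - (\<Sum>j\<in>A - {j0}. c j * v j q) / v j0 q * v j0 i"
          by (simp add: w_def algebra_simps sum_subtractf sum_distrib_left sum_distrib_right sum_divide_distrib)
        ultimately show "(\<Sum>j\<in>A. c' j * v j i) = 0"
          using H by (simp add: c'_def algebra_simps)
      qed
      then have "\<forall>j\<in>A. c' j = 0" using insert.prems(2) unfolding indep_def by blast
      then show "\<forall>j\<in>A - {j0}. c j = 0" unfolding c'_def by (metis DiffE singletonI)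
    qed
    have "card (A - {j0}) \<le> card U'"
      using insert.IH[of "A - {j0}" w] insert.prems(1) ind supp by auto
    then show ?thesis using insert.hyps j0 insert.prems(1)
      by (simp add: card_Diff_singleton_if)
  qed
qed

lemma cs_indep: "contains_simplex s S m \<longleftrightarrow> (\<exists>p v. p \<in> Rs s \<and> (\<forall>j<m. v j \<in> Rs s) \<and> indep v {..<m} \<and>
      (\<forall>t::nat \<Rightarrow> real. (\<forall>j<m. 0 \<le> t j) \<and> (\<Sum>j<m. t j) \<le> 1 \<longrightarrow>
          (\<lambda>i. p i + (\<Sum>j<m. t j * v j i)) \<in> S))"
  unfolding contains_simplex_def indep_def Ball_def lessThan_iff by (rule refl)

lemma cs_le: assumes "contains_simplex s S m" shows "m \<le> s"
proof -
  obtain p v where v: "\<forall>j<m. v j \<in> Rs s" "indep v {..<m}"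
    using assms unfolding cs_indep by blast
  have "card {..<m} \<le> card {1..s}"
    by (rule lin_bound) (use v in \<open>auto simp: Rs_def\<close>)
  then show ?thesis by simp
qed

lemma dim_le: assumes "\<And>m. contains_simplex s S m \<Longrightarrow> m \<le> N" shows "set_dim s S \<le> N"
proof (cases "{m. contains_simplex s S m} = {}")
  case True then show ?thesis by (simp add: set_dim_def)
next
  case False
  have fin: "finite {m. contains_simplex s S m}"
    by (rule finite_subset[of _ "{..s}"]) (auto dest: cs_le)
  show ?thesis unfolding set_dim_def
    using False fin assms by (simp add: Sup_nat_def)
qed

lemma dim_ge: assumes "contains_simplex s S m" shows "m \<le> set_dim s S"
proof -
  have fin: "finite {m. contains_simplex s S m}"
    by (rule finite_subset[of _ "{..s}"]) (auto dest: cs_le)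
  show ?thesis unfolding set_dim_def using assms fin by (auto simp: Sup_nat_def)
qed

lemma dim_attained: assumes "contains_simplex s S m" shows "contains_simplex s S (set_dim s S)"
proof -
  have fin: "finite {m. contains_simplex s S m}"
    by (rule finite_subset[of _ "{..s}"]) (auto dest: cs_le)
  have ne: "{m. contains_simplex s S m} \<noteq> {}" using assms by blast
  have "set_dim s S \<in> {m. contains_simplex s S m}"
    unfolding set_dim_def using Max_in[OF fin ne] ne by (simp add: Sup_nat_def)
  then show ?thesis by simp
qed

lemma dim_le_s: "set_dim s S \<le> s"
  by (rule dim_le) (rule cs_le)

definition lineclosed :: "(nat \<Rightarrow> real) set \<Rightarrow> bool" where
  "lineclosed A \<longleftrightarrow> (\<forall>x\<in>A. \<forall>y\<in>A. \<forall>t::real. (\<lambda>i. (1-t)*x i + t*y i) \<in> A)"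

definition convexf :: "(nat \<Rightarrow> real) set \<Rightarrow> bool" where
  "convexf S \<longleftrightarrow> (\<forall>x\<in>S. \<forall>y\<in>S. \<forall>t::real. 0 \<le> t \<and> t \<le> 1 \<longrightarrow> (\<lambda>i. (1-t)*x i + t*y i) \<in> S)"

lemma line_aff:
  assumes "lineclosed A" "t1 \<noteq> t2"
    "(\<lambda>i. x i + t1 * (y i - x i)) \<in> A" "(\<lambda>i. x i + t2 * (y i - x i)) \<in> A"
  shows "(\<lambda>i. x i + \<sigma> * (y i - x i)) \<in> A"
proof -
  define \<tau> where "\<tau> = (\<sigma> - t1) / (t2 - t1)"
  have gen: "(\<lambda>i. (1-\<tau>) * X i + \<tau> * Y i) \<in> A" if "X \<in> A" "Y \<in> A" for X Y
    using assms(1) that unfolding lineclosed_def by blast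
  have "(\<lambda>i. (1-\<tau>) * (x i + t1 * (y i - x i)) + \<tau> * (x i + t2 * (y i - x i))) \<in> A"
    using gen[OF assms(3) assms(4)] by simp
  moreover have "(\<lambda>i. (1-\<tau>) * (x i + t1 * (y i - x i)) + \<tau> * (x i + t2 * (y i - x i)))
      = (\<lambda>i. x i + \<sigma> * (y i - x i))"
  proof
    fix i
    have "t2 - t1 \<noteq> 0" using assms(2) by simp
    then have e: "\<tau> * (t2 - t1) = \<sigma> - t1" unfolding \<tau>_def by simp
    have "(1-\<tau>) * (x i + t1 * (y i - x i)) + \<tau> * (x i + t2 * (y i - x i))
       = x i + (t1 + \<tau> * (t2 - t1)) * (y i - x i)" by (simp add: algebra_simps)
    then show "(1-\<tau>) * (x i + t1 * (y i - x i)) + \<tau> * (x i + t2 * (y i - x i)) = x i + \<sigma> * (y i - x i)"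
      using e by simp
  qed
  ultimately show ?thesis by simp
qed

lemma convex_cover:
  assumes "finite F"
  shows "(\<forall>A\<in>F. lineclosed A) \<Longrightarrow> convexf S \<Longrightarrow> S \<subseteq> \<Union>F \<Longrightarrow> S \<noteq> {} \<Longrightarrow> \<exists>A\<in>F. S \<subseteq> A"
  using assms
proof (induction F rule: finite_induct)
  case empty then show ?case by auto
next
  case (insert A F')
  show ?case
  proof (cases "S \<subseteq> A")
    case True then show ?thesis by auto
  next
    case False
    then obtain x where x: "x \<in> S" "x \<notin> A" by blast
    have "S \<subseteq> \<Union>F'"
    proof
      fix y assume y: "y \<in> S"
      show "y \<in> \<Union>F'"
      proof (cases "y = x")
        case True
        have "x \<in> \<Union>(insert A F')" using x insert.prems(3) by blast
        then show ?thesis using True x(2) by simp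
      next
        case False
        define t where "t k = 1 / real (Suc k)" for k
        define z where "z k = (\<lambda>i. x i + t k * (y i - x i))" for k
        have tinj: "t k1 = t k2 \<Longrightarrow> k1 = k2" for k1 k2 by (simp add: t_def)
        have zS: "z k \<in> S" for k
        proof -
          have "0 \<le> t k" "t k \<le> 1" by (auto simp: t_def)
          then have "(\<lambda>i. (1 - t k) * x i + t k * y i) \<in> S"
            using insert.prems(2) x y unfolding convexf_def by blast
          moreover have "(\<lambda>i. (1 - t k) * x i + t k * y i) = z k"
            by (auto simp: z_def algebra_simps)
          ultimately show ?thesis by simp
        qed
        have lcA: "lineclosed A" using insert.prems(1) by simp
        have atmost: "k1 = k2" if "z k1 \<in> A" "z k2 \<in> A" for k1 k2
        proof (rule ccontr)
          assume "k1 \<noteq> k2"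
          then have "t k1 \<noteq> t k2" using tinj by blast
          then have "(\<lambda>i. x i + 0 * (y i - x i)) \<in> A"
            by (rule line_aff[OF lcA]) (use that in \<open>simp_all add: z_def\<close>)
          then show False using x by simp
        qed
        have inU: "z k \<in> \<Union>(insert A F')" for k using zS insert.prems(3) by blast
        have "infinite {k. z k \<in> \<Union>F'}"
        proof
          assume fin: "finite {k. z k \<in> \<Union>F'}"
          have "UNIV \<subseteq> {k. z k \<in> \<Union>F'} \<union> {k. z k \<in> A}" using inU by auto
          moreover have "finite {k. z k \<in> A}"
          proof (cases "\<exists>k. z k \<in> A")
            case True
            then obtain k0 where "z k0 \<in> A" by blast
            then have "{k. z k \<in> A} \<subseteq> {k0}" using atmost by blast
            then show ?thesis using finite_subset by blast
          next
            case False then show ?thesis by simp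
          qed
          ultimately have "finite (UNIV :: nat set)" using fin finite_subset by blast
          then show False by simp
        qed
        moreover have "{k. z k \<in> \<Union>F'} = (\<Union>A'\<in>F'. {k. z k \<in> A'})" by auto
        ultimately have "infinite (\<Union>A'\<in>F'. {k. z k \<in> A'})" by simp
        then obtain A' where A': "A' \<in> F'" "infinite {k. z k \<in> A'}"
          using finite_UN[OF insert.hyps(1)] by blast
        have "{k. z k \<in> A'} \<noteq> {}" using A'(2) by (metis finite.emptyI)
        then obtain k1 where k1: "z k1 \<in> A'" by blast
        have "infinite ({k. z k \<in> A'} - {k1})" using A'(2) by simp
        then have "{k. z k \<in> A'} - {k1} \<noteq> {}" by (metis finite.emptyI)
        then obtain k2 where k2: "z k2 \<in> A'" "k2 \<noteq> k1" by blast
        have "t k1 \<noteq> t k2" using tinj k2(2) by blast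
        have lcA': "lineclosed A'" using insert.prems(1) A' by simp
        have "(\<lambda>i. x i + 1 * (y i - x i)) \<in> A'"
          by (rule line_aff[OF lcA' \<open>t k1 \<noteq> t k2\<close>]) (use k1 k2 in \<open>simp_all add: z_def\<close>)
        then have "y \<in> A'" by simp
        then show ?thesis using A' by blast
      qed
    qed
    then obtain A' where "A' \<in> F'" "S \<subseteq> A'"
      using insert.IH[OF _ insert.prems(2) _ insert.prems(4)] insert.prems(1) by auto
    then show ?thesis by blast
  qed
qed

locale regctx =
  fixes a :: "nat \<Rightarrow> ereal" and n d m :: nat and b :: "nat \<Rightarrow> real"
  assumes n_eq: "n = d * m" and d_pos: "d \<ge> 1" and m_pos: "m \<ge> 1"
    and a_J: "\<And>j. j \<le> m \<Longrightarrow> a (d * j) = ereal (b j)"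
    and a_notJ: "\<And>i. i \<le> n \<Longrightarrow> (\<forall>j\<le>m. i \<noteq> d * j) \<Longrightarrow> a i = \<infinity>"
    and conv: "\<And>j. 0 < j \<Longrightarrow> j < m \<Longrightarrow> 2 * b j < b (j - 1) + b (j + 1)"
begin

lemma slope_strict: "1 \<le> j1 \<Longrightarrow> j1 < j2 \<Longrightarrow> j2 \<le> m \<Longrightarrow> b j1 - b (j1 - 1) < b j2 - b (j2 - 1)"
proof (induction j2)
  case 0 then show ?case by simp
next
  case (Suc j)
  have c: "2 * b j < b (j - 1) + b (j + 1)" using conv[of j] Suc.prems by simp
  show ?case
  proof (cases "j1 = j")
    case True then show ?thesis using c by simp
  next
    case False
    then have "b j1 - b (j1 - 1) < b j - b (j - 1)" using Suc by simp
    then show ?thesis using c by simp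
  qed
qed

definition T :: "(nat \<Rightarrow> real) \<Rightarrow> nat \<Rightarrow> nat \<Rightarrow> real" where
  "T z k j = b j + z (k + 1 + d * j)"

definition ismin :: "(nat \<Rightarrow> real) \<Rightarrow> nat \<Rightarrow> nat \<Rightarrow> bool" where
  "ismin z k j \<longleftrightarrow> j \<le> m \<and> (\<forall>j'\<le>m. T z k j \<le> T z k j')"

lemma win:
  assumes "z \<in> D_set a n s" "k + n + 1 \<le> s"
  shows "\<exists>j1 j2. j1 < j2 \<and> ismin z k j1 \<and> ismin z k j2"
proof -
  obtain i i' where ii: "i \<le> n" "i' \<le> n" "i \<noteq> i'"
    "\<forall>l\<le>n. a i + ereal (z (k+1+i)) \<le> a l + ereal (z (k+1+l))"
    "\<forall>l\<le>n. a i' + ereal (z (k+1+i')) \<le> a l + ereal (z (k+1+l))"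
    using assms unfolding D_set_def by blast
  have inJ: "\<exists>j\<le>m. i0 = d * j \<and> (\<forall>j'\<le>m. T z k j \<le> T z k j')"
    if i0le: "i0 \<le> n" and i0min: "\<forall>l\<le>n. a i0 + ereal (z (k+1+i0)) \<le> a l + ereal (z (k+1+l))" for i0
  proof -
    have "\<exists>j\<le>m. i0 = d * j"
    proof (rule ccontr)
      assume "\<not> ?thesis"
      then have "a i0 = \<infinity>" using a_notJ i0le by blast
      moreover have "a i0 + ereal (z (k+1+i0)) \<le> a 0 + ereal (z (k+1+0))" using i0min by blast
      moreover have "a 0 = ereal (b 0)" using a_J[of 0] by simp
      ultimately show False by simp
    qed
    then obtain j where j: "j \<le> m" "i0 = d * j" by blast
    have "T z k j \<le> T z k j'" if "j' \<le> m" for j'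
    proof -
      have "d * j' \<le> n" using that n_eq by simp
      then have "a i0 + ereal (z (k+1+i0)) \<le> a (d*j') + ereal (z (k+1+d*j'))" using i0min by blast
      then show ?thesis using a_J[OF j(1)] a_J[OF that] j(2) by (simp add: T_def)
    qed
    then show ?thesis using j by blast
  qed
  obtain j1 where j1: "j1 \<le> m" "i = d * j1" "\<forall>j'\<le>m. T z k j1 \<le> T z k j'" using inJ ii by blast
  obtain j2 where j2: "j2 \<le> m" "i' = d * j2" "\<forall>j'\<le>m. T z k j2 \<le> T z k j'" using inJ ii by blast
  have "j1 \<noteq> j2" using ii(3) j1 j2 by blast
  then show ?thesis using j1 j2 unfolding ismin_def
    by (metis linorder_neqE_nat)
qed

definition hi :: "(nat \<Rightarrow> real) \<Rightarrow> nat \<Rightarrow> nat" where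
  "hi z k = (GREATEST j. ismin z k j)"
definition lo :: "(nat \<Rightarrow> real) \<Rightarrow> nat \<Rightarrow> nat" where
  "lo z k = (LEAST j. ismin z k j)"

lemma hilo:
  assumes "z \<in> D_set a n s" "k + n + 1 \<le> s"
  shows "ismin z k (hi z k)" "ismin z k (lo z k)" "lo z k < hi z k"
    "\<And>j. ismin z k j \<Longrightarrow> j \<le> hi z k" "\<And>j. ismin z k j \<Longrightarrow> lo z k \<le> j"
proof -
  obtain j1 j2 where j: "j1 < j2" "ismin z k j1" "ismin z k j2" using win[OF assms] by blast
  have bnd: "\<And>y. ismin z k y \<Longrightarrow> y \<le> m" by (simp add: ismin_def)
  show "ismin z k (hi z k)" unfolding hi_def by (rule GreatestI_nat[where P="ismin z k", OF j(2) bnd])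
  show "ismin z k (lo z k)" unfolding lo_def by (rule LeastI[where P="ismin z k", OF j(2)])
  show le: "\<And>j. ismin z k j \<Longrightarrow> j \<le> hi z k" unfolding hi_def by (rule Greatest_le_nat[where P="ismin z k", OF _ bnd])
  show ge: "\<And>j. ismin z k j \<Longrightarrow> lo z k \<le> j" unfolding lo_def by (rule Least_le[where P="ismin z k"])
  show "lo z k < hi z k" using le[OF j(3)] ge[OF j(2)] j(1) by simp
qed

lemma mono1:
  assumes "z \<in> D_set a n s" "k + d + n + 1 \<le> s"
  shows "hi z k \<le> hi z (k + d)"
proof -
  have vk: "k + n + 1 \<le> s" using assms by simp
  define h where "h = hi z k"
  have hmin: "ismin z k h" and h1: "1 \<le> h" using hilo[OF assms(1) vk] unfolding h_def by auto
  have hm: "h \<le> m" using hmin ismin_def by simp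
  have low: "h - 1 \<le> j" if "ismin z (k+d) j" for j
  proof (rule ccontr)
    assume "\<not> h - 1 \<le> j"
    then have jh: "j + 1 < h" by simp
    have e1: "T z (k+d) j = T z k (j+1) - b (j+1) + b j"
      by (simp add: T_def algebra_simps)
    have e2: "T z (k+d) (h-1) = T z k h - b h + b (h-1)"
      using h1 by (cases h) (simp_all add: T_def algebra_simps)
    have "T z k h \<le> T z k (j+1)" using hmin jh hm unfolding ismin_def by simp
    moreover have "b (j+1) - b j < b h - b (h-1)" using slope_strict[of "j+1" h] jh hm by simp
    ultimately have "T z (k+d) (h-1) < T z (k+d) j" using e1 e2 by simp
    moreover have "T z (k+d) j \<le> T z (k+d) (h-1)" using that hm unfolding ismin_def by simp
    ultimately show False by simp
  qed
  have "h - 1 \<le> lo z (k+d)" using low hilo(2)[OF assms(1)] assms(2) by simp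
  moreover have "lo z (k+d) < hi z (k+d)" using hilo(3)[OF assms(1)] assms(2) by simp
  ultimately show ?thesis unfolding h_def[symmetric] by simp
qed

lemma mono:
  assumes "z \<in> D_set a n s"
  shows "k + d * t + n + 1 \<le> s \<Longrightarrow> hi z k \<le> hi z (k + d * t)"
proof (induction t)
  case 0 then show ?case by simp
next
  case (Suc t)
  have ih: "hi z k \<le> hi z (k + d*t)" by (rule Suc.IH) (use Suc.prems in simp)
  have st: "hi z (k + d*t) \<le> hi z (k + d*t + d)"
    by (rule mono1[OF assms]) (use Suc.prems in simp)
  have eq: "k + d*t + d = k + d * Suc t" by simp
  show ?case using ih st unfolding eq by (rule order.trans)
qed

definition cov :: "(nat \<Rightarrow> real) \<Rightarrow> nat \<Rightarrow> nat" where
  "cov z k = k + 1 + d * hi z k"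

lemma cov_inj:
  assumes "z \<in> D_set a n s" "n + 1 \<le> s"
  shows "inj_on (cov z) {0..s - n - 1}"
proof (rule inj_onI)
  fix k1 k2 assume k: "k1 \<in> {0..s - n - 1}" "k2 \<in> {0..s - n - 1}" and e: "cov z k1 = cov z k2"
  have gen: "False" if "ka < kb" "kb \<le> s - n - 1" "cov z ka = cov z kb" for ka kb
  proof -
    have e0: "ka + d * hi z ka = kb + d * hi z kb" using that(3) unfolding cov_def by simp
    have "int (ka + d * hi z ka) = int (kb + d * hi z kb)" using e0 by simp
    then have "int ka + int d * int (hi z ka) = int kb + int d * int (hi z kb)" by simp
    then have "int kb - int ka = int d * (int (hi z ka) - int (hi z kb))"
      by (simp add: algebra_simps)
    then have pos: "int (hi z ka) - int (hi z kb) > 0" using that(1) d_pos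
      by (smt (verit) of_nat_less_iff mult_nonneg_nonpos of_nat_0_le_iff)
    define t where "t = hi z ka - hi z kb"
    have "int t = int (hi z ka) - int (hi z kb)" using pos unfolding t_def by simp
    then have "int kb = int ka + int d * int t" using \<open>int kb - int ka = _\<close> by simp
    then have kb: "kb = ka + d * t" by (metis of_nat_add of_nat_eq_iff of_nat_mult)
    have "hi z ka \<le> hi z (ka + d * t)" by (rule mono[OF assms(1)]) (use that assms(2) kb in simp)
    then show False using kb pos by simp
  qed
  show "k1 = k2"
  proof (rule ccontr)
    assume "k1 \<noteq> k2"
    then show False using gen[of k1 k2] gen[of k2 k1] k e by (cases "k1 < k2") auto
  qed
qed

lemma cov_range:
  assumes "z \<in> D_set a n s" "k \<le> s - n - 1" "n + 1 \<le> s"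
  shows "cov z k \<in> {1..s}"
proof -
  have "hi z k \<le> m" using hilo(1)[OF assms(1), of k] assms unfolding ismin_def by simp
  then have "d * hi z k \<le> n" using n_eq by simp
  then show ?thesis unfolding cov_def using assms by auto
qed

definition Uset :: "(nat \<Rightarrow> real) \<Rightarrow> nat \<Rightarrow> nat set" where
  "Uset z s = {1..s} - cov z ` {0..s - n - 1}"

lemma card_Uset:
  assumes "z \<in> D_set a n s" "n + 1 \<le> s"
  shows "card (Uset z s) = n"
proof -
  have sub: "cov z ` {0..s - n - 1} \<subseteq> {1..s}" using cov_range[OF assms(1) _ assms(2)] by auto
  have "card (cov z ` {0..s - n - 1}) = s - n" using card_image[OF cov_inj[OF assms]] assms(2) by simp
  then show ?thesis unfolding Uset_def using card_Diff_subset[OF _ sub] assms(2) by simp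
qed

definition Aff :: "(nat \<Rightarrow> real) \<Rightarrow> nat \<Rightarrow> (nat \<Rightarrow> real) set" where
  "Aff z s = {y. \<forall>k\<le>s - n - 1. b (lo z k) + y (k + 1 + d * lo z k) = b (hi z k) + y (k + 1 + d * hi z k)}"

lemma Aff_lineclosed: "lineclosed (Aff z s)"
  unfolding lineclosed_def Aff_def
proof (intro ballI allI, clarsimp)
  fix x y :: "nat \<Rightarrow> real" and t k
  assume x: "\<forall>k\<le>s - Suc n. b (lo z k) + x (Suc (k + d * lo z k)) = b (hi z k) + x (Suc (k + d * hi z k))"
    and y: "\<forall>k\<le>s - Suc n. b (lo z k) + y (Suc (k + d * lo z k)) = b (hi z k) + y (Suc (k + d * hi z k))"
    and k: "k \<le> s - Suc n"
  have ex: "x (Suc (k + d * lo z k)) = b (hi z k) - b (lo z k) + x (Suc (k + d * hi z k))" using x k by force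
  have ey: "y (Suc (k + d * lo z k)) = b (hi z k) - b (lo z k) + y (Suc (k + d * hi z k))" using y k by force
  show "b (lo z k) + ((1 - t) * x (Suc (k + d * lo z k)) + t * y (Suc (k + d * lo z k))) =
        b (hi z k) + ((1 - t) * x (Suc (k + d * hi z k)) + t * y (Suc (k + d * hi z k)))"
    unfolding ex ey by (simp add: algebra_simps)
qed

lemma in_Aff:
  assumes "z \<in> D_set a n s" "n + 1 \<le> s"
  shows "z \<in> Aff z s"
  unfolding Aff_def
proof (intro CollectI allI impI)
  fix k assume k: "k \<le> s - n - 1"
  then have v: "k + n + 1 \<le> s" using assms(2) by simp
  have "T z k (lo z k) = T z k (hi z k)"
    using hilo[OF assms(1) v] unfolding ismin_def by (meson order_antisym)
  then show "b (lo z k) + z (k + 1 + d * lo z k) = b (hi z k) + z (k + 1 + d * hi z k)"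
    by (simp add: T_def)
qed

lemma Aff_finite:
  assumes "n + 1 \<le> s"
  shows "finite ((\<lambda>z. Aff z s) ` D_set a n s)"
proof -
  define AffM where "AffM M = {y. \<forall>k\<le>s - n - 1. b (fst (M k)) + y (k + 1 + d * fst (M k)) = b (snd (M k)) + y (k + 1 + d * snd (M k))}"
    for M :: "nat \<Rightarrow> nat \<times> nat"
  have "(\<lambda>z. Aff z s) ` D_set a n s \<subseteq> AffM ` ({0..s - n - 1} \<rightarrow>\<^sub>E ({0..m} \<times> {0..m}))"
  proof
    fix A assume "A \<in> (\<lambda>z. Aff z s) ` D_set a n s"
    then obtain z where z: "z \<in> D_set a n s" "A = Aff z s" by blast
    define M where "M = restrict (\<lambda>k. (lo z k, hi z k)) {0..s - n - 1}"
    have "M \<in> {0..s - n - 1} \<rightarrow>\<^sub>E ({0..m} \<times> {0..m})"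
    proof -
      have "lo z k \<le> m \<and> hi z k \<le> m" if "k \<le> s - n - 1" for k
        using hilo(1,2)[OF z(1), of k] that assms unfolding ismin_def by simp
      then show ?thesis unfolding M_def by auto
    qed
    moreover have "A = AffM M" unfolding z(2) Aff_def AffM_def M_def by auto
    ultimately show "A \<in> AffM ` ({0..s - n - 1} \<rightarrow>\<^sub>E ({0..m} \<times> {0..m}))" by blast
  qed
  moreover have "finite ({0..s - n - 1} \<rightarrow>\<^sub>E ({0..m} \<times> {0..m}))" by (rule finite_PiE) auto
  ultimately show ?thesis using finite_subset by blast
qed

end

lemma simplex_convex:
  "convexf {x. \<exists>t. (\<forall>j<m'. 0 \<le> t j) \<and> (\<Sum>j<m'. t j) \<le> 1 \<and> x = (\<lambda>i. p i + (\<Sum>j<m'. t j * v j i))}"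
  unfolding convexf_def
proof (intro ballI allI impI)
  fix x y and \<theta> :: real
  assume x: "x \<in> {x. \<exists>t. (\<forall>j<m'. 0 \<le> t j) \<and> (\<Sum>j<m'. t j) \<le> 1 \<and> x = (\<lambda>i. p i + (\<Sum>j<m'. t j * v j i))}"
    and y: "y \<in> {x. \<exists>t. (\<forall>j<m'. 0 \<le> t j) \<and> (\<Sum>j<m'. t j) \<le> 1 \<and> x = (\<lambda>i. p i + (\<Sum>j<m'. t j * v j i))}"
    and th: "0 \<le> \<theta> \<and> \<theta> \<le> 1"
  obtain t where t: "\<forall>j<m'. 0 \<le> t j" "(\<Sum>j<m'. t j) \<le> 1" "x = (\<lambda>i. p i + (\<Sum>j<m'. t j * v j i))"
    using x by blast
  obtain t' where t': "\<forall>j<m'. 0 \<le> t' j" "(\<Sum>j<m'. t' j) \<le> 1" "y = (\<lambda>i. p i + (\<Sum>j<m'. t' j * v j i))"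
    using y by blast
  define t'' where "t'' j = (1 - \<theta>) * t j + \<theta> * t' j" for j
  have "\<forall>j<m'. 0 \<le> t'' j" using t t' th unfolding t''_def by simp
  moreover have "(\<Sum>j<m'. t'' j) = (1 - \<theta>) * (\<Sum>j<m'. t j) + \<theta> * (\<Sum>j<m'. t' j)"
    unfolding t''_def by (simp add: sum.distrib sum_distrib_left)
  then have "(\<Sum>j<m'. t'' j) \<le> 1"
    using t(2) t'(2) th mult_left_le[of "\<Sum>j<m'. t j" "1 - \<theta>"] mult_left_le[of "\<Sum>j<m'. t' j" "\<theta>"] by linarith
  moreover have "(\<lambda>i. (1 - \<theta>) * x i + \<theta> * y i) = (\<lambda>i. p i + (\<Sum>j<m'. t'' j * v j i))"
  proof
    fix i
    have "(\<Sum>j<m'. t'' j * v j i) = (\<Sum>j<m'. (1 - \<theta>) * (t j * v j i) + \<theta> * (t' j * v j i))"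
      by (rule sum.cong) (simp_all add: t''_def algebra_simps)
    also have "\<dots> = (1 - \<theta>) * (\<Sum>j<m'. t j * v j i) + \<theta> * (\<Sum>j<m'. t' j * v j i)"
      by (simp add: sum.distrib sum_distrib_left)
    finally have "(\<Sum>j<m'. t'' j * v j i) = (1 - \<theta>) * (\<Sum>j<m'. t j * v j i) + \<theta> * (\<Sum>j<m'. t' j * v j i)" .
    then show "(1 - \<theta>) * x i + \<theta> * y i = p i + (\<Sum>j<m'. t'' j * v j i)"
      using t(3) t'(3) by (simp add: algebra_simps)
  qed
  ultimately show "(\<lambda>i. (1 - \<theta>) * x i + \<theta> * y i) \<in> {x. \<exists>t. (\<forall>j<m'. 0 \<le> t j) \<and> (\<Sum>j<m'. t j) \<le> 1 \<and> x = (\<lambda>i. p i + (\<Sum>j<m'. t j * v j i))}"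
    by blast
qed

lemma simplex_vertex:
  assumes "\<forall>t::nat \<Rightarrow> real. (\<forall>j<m'. 0 \<le> t j) \<and> (\<Sum>j<m'. t j) \<le> 1 \<longrightarrow> (\<lambda>i. p i + (\<Sum>j<m'. t j * v j i)) \<in> S"
  shows "p \<in> S" "\<And>j. j < m' \<Longrightarrow> (\<lambda>i. p i + v j i) \<in> S"
proof -
  have "(\<lambda>i. p i + (\<Sum>j<m'. 0 * v j i)) \<in> S" using assms[rule_format, of "\<lambda>_. 0"] by simp
  then show "p \<in> S" by simp
  fix j assume j: "j < m'"
  define t where "t j' = (if j' = j then 1 else 0::real)" for j'
  have "(\<lambda>i. p i + (\<Sum>j<m'. t j * v j i)) \<in> S" using assms[rule_format, of t] j
    by (simp add: t_def)
  moreover have "(\<Sum>j'<m'. t j' * v j' i) = v j i" for i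
  proof -
    have "(\<Sum>j'<m'. t j' * v j' i) = (\<Sum>j'<m'. if j' = j then v j' i else 0)"
      by (rule sum.cong) (auto simp: t_def)
    then show ?thesis using j by simp
  qed
  ultimately show "(\<lambda>i. p i + v j i) \<in> S" by simp
qed

context regctx begin

lemma reg_cs_le:
  assumes s: "n + 1 \<le> s" and cs: "contains_simplex s (D_set a n s) m'"
  shows "m' \<le> n"
proof -
  obtain p v where pv: "p \<in> Rs s" "\<forall>j<m'. v j \<in> Rs s" "indep v {..<m'}"
    and sim: "\<forall>t::nat \<Rightarrow> real. (\<forall>j<m'. 0 \<le> t j) \<and> (\<Sum>j<m'. t j) \<le> 1 \<longrightarrow>
          (\<lambda>i. p i + (\<Sum>j<m'. t j * v j i)) \<in> D_set a n s"
    using cs unfolding cs_indep by blast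
  define S where "S = {x. \<exists>t. (\<forall>j<m'. 0 \<le> t j) \<and> (\<Sum>j<m'. t j) \<le> 1 \<and> x = (\<lambda>i. p i + (\<Sum>j<m'. t j * v j i))}"
  have SD: "S \<subseteq> D_set a n s" unfolding S_def using sim by blast
  have Ssim: "\<forall>t::nat \<Rightarrow> real. (\<forall>j<m'. 0 \<le> t j) \<and> (\<Sum>j<m'. t j) \<le> 1 \<longrightarrow> (\<lambda>i. p i + (\<Sum>j<m'. t j * v j i)) \<in> S"
    unfolding S_def by blast
  have "S \<subseteq> \<Union>((\<lambda>z. Aff z s) ` D_set a n s)" using SD in_Aff[OF _ s] by blast
  moreover have "S \<noteq> {}" using simplex_vertex(1)[OF Ssim] by blast
  moreover have "convexf S" unfolding S_def by (rule simplex_convex)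
  moreover have "\<forall>A\<in>(\<lambda>z. Aff z s) ` D_set a n s. lineclosed A" using Aff_lineclosed by blast
  ultimately obtain A where "A \<in> (\<lambda>z. Aff z s) ` D_set a n s" "S \<subseteq> A"
    using convex_cover[OF Aff_finite[OF s]] by blast
  then obtain z0 where z0: "z0 \<in> D_set a n s" "S \<subseteq> Aff z0 s" by blast
  have pA: "p \<in> Aff z0 s" using z0(2) simplex_vertex(1)[OF Ssim] by blast
  have vA: "(\<lambda>i. p i + v j i) \<in> Aff z0 s" if "j < m'" for j using z0(2) simplex_vertex(2)[OF Ssim that] by blast
  have veq: "v j (k + 1 + d * lo z0 k) = v j (k + 1 + d * hi z0 k)" if "j < m'" "k \<le> s - n - 1" for j k
  proof -
    have "b (lo z0 k) + p (k + 1 + d * lo z0 k) = b (hi z0 k) + p (k + 1 + d * hi z0 k)"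
      using pA that(2) unfolding Aff_def by blast
    moreover have "b (lo z0 k) + (p (k + 1 + d * lo z0 k) + v j (k + 1 + d * lo z0 k))
        = b (hi z0 k) + (p (k + 1 + d * hi z0 k) + v j (k + 1 + d * hi z0 k))"
      using vA[OF that(1)] that(2) unfolding Aff_def by blast
    ultimately show ?thesis by simp
  qed
  define U where "U = Uset z0 s"
  define w where "w j i = (if i \<in> U then v j i else 0)" for j i
  have "indep w {..<m'}"
    unfolding indep_def
  proof (intro allI impI)
    fix c assume H: "\<forall>i. (\<Sum>j\<in>{..<m'}. c j * w j i) = 0"
    define y where "y i = (\<Sum>j\<in>{..<m'}. c j * v j i)" for i
    have "y i = 0" for i
    proof (induction i rule: less_induct)
      case (less i)
      show ?case
      proof (cases "i \<in> {1..s}")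
        case False
        then have "\<forall>j<m'. v j i = 0" using pv(2) unfolding Rs_def by auto
        then show ?thesis unfolding y_def by simp
      next
        case True
        show ?thesis
        proof (cases "i \<in> U")
          case True
          then show ?thesis using H[rule_format, of i] unfolding y_def w_def by simp
        next
          case False
          then obtain k where k: "k \<le> s - n - 1" "i = cov z0 k"
            using \<open>i \<in> {1..s}\<close> unfolding U_def Uset_def by auto
          have vk: "k + n + 1 \<le> s" using k s by simp
          have lh: "lo z0 k < hi z0 k" using hilo(3)[OF z0(1) vk] .
          have "k + 1 + d * lo z0 k < k + 1 + d * hi z0 k" using lh d_pos by simp
          then have lt: "k + 1 + d * lo z0 k < i" using k(2) unfolding cov_def by simp
          have "y i = y (k + 1 + d * lo z0 k)"
            unfolding y_def k(2) cov_def using veq[OF _ k(1)] by (intro sum.cong) auto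
          then show ?thesis using less[OF lt] by simp
        qed
      qed
    qed
    then have "\<forall>i. (\<Sum>j\<in>{..<m'}. c j * v j i) = 0" unfolding y_def by blast
    then show "\<forall>j\<in>{..<m'}. c j = 0" using pv(3) unfolding indep_def by blast
  qed
  then have "card {..<m'} \<le> card U"
    by (intro lin_bound) (auto simp: w_def U_def Uset_def)
  then show ?thesis using card_Uset[OF z0(1) s] unfolding U_def by simp
qed

lemma reg_dseq_le: "n + 1 \<le> s \<Longrightarrow> d_seq a n s \<le> n"
  unfolding d_seq_def by (rule dim_le) (rule reg_cs_le)

end

lemma regular_ctx:
  assumes reg: "regular a n" and n1: "n \<ge> 1" and ninf: "\<forall>i\<le>n. a i \<noteq> -\<infinity>"
    and a0: "a 0 < \<infinity>" and an: "a n < \<infinity>"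
  shows "\<exists>d m b. regctx a n d m b"
proof -
  have ap: "arith_prog (supp_idx a n)" using reg unfolding regular_def by blast
  then obtain c d m where J: "supp_idx a n = {c + d * k | k. k \<le> m}" unfolding arith_prog_def by blast
  have "0 \<in> supp_idx a n" using a0 unfolding supp_idx_def by simp
  then have c0: "c = 0" using J by auto
  have "n \<in> supp_idx a n" using an unfolding supp_idx_def by simp
  then obtain k0 where k0: "k0 \<le> m" "n = d * k0" using J c0 by auto
  have "d * m \<in> supp_idx a n" using J c0 by auto
  then have dm: "d * m \<le> n" unfolding supp_idx_def by simp
  have "d * k0 \<le> d * m" using k0 by simp
  then have n_eq: "n = d * m" using dm k0(2) by linarith
  have d1: "d \<ge> 1" and m1: "m \<ge> 1" using n_eq n1 by (auto simp: Suc_le_eq)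
  have J': "supp_idx a n = {d * k | k. k \<le> m}" using J c0 by simp
  define b where "b j = real_of_ereal (a (d * j))" for j
  have aJ: "a (d * j) = ereal (b j)" if "j \<le> m" for j
  proof -
    have "d * j \<in> supp_idx a n" using J' that by auto
    then have "a (d * j) < \<infinity>" "d * j \<le> n" unfolding supp_idx_def by auto
    moreover have "a (d * j) \<noteq> -\<infinity>" using ninf \<open>d * j \<le> n\<close> by blast
    ultimately show ?thesis unfolding b_def by (cases "a (d * j)") auto
  qed
  have anJ: "a i = \<infinity>" if "i \<le> n" "\<forall>j\<le>m. i \<noteq> d * j" for i
  proof -
    have "i \<notin> supp_idx a n" using J' that(2) by auto
    then show ?thesis using that(1) unfolding supp_idx_def by (simp add: not_less top_unique)
  qed
  have conv: "2 * b j < b (j - 1) + b (j + 1)" if j: "0 < j" "j < m" for j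
  proof (rule ccontr)
    assume neg: "\<not> 2 * b j < b (j - 1) + b (j + 1)"
    define \<delta> where "\<delta> = b j - (b (j - 1) + b (j + 1)) / 2"
    have \<delta>0: "\<delta> \<ge> 0" using neg unfolding \<delta>_def by simp
    define P where "P = newton_polygon a n"
    have gen: "(real (d * i), b i + \<delta>) \<in> P" if "i \<le> m" for i
    proof -
      have "d * i \<in> supp_idx a n" using J' that by auto
      moreover have "a (d * i) \<le> ereal (b i + \<delta>)" using aJ[OF that] \<delta>0 by simp
      ultimately have "(real (d * i), b i + \<delta>) \<in> (\<Union>i\<in>supp_idx a n. {(real i, b) | b. a i \<le> ereal b})"
        by blast
      then show ?thesis unfolding P_def newton_polygon_def by (rule hull_inc)
    qed
    have P1: "(real (d * (j - 1)), b (j - 1) + \<delta>) \<in> P" by (rule gen) (use j in linarith)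
    have P2: "(real (d * (j + 1)), b (j + 1) + \<delta>) \<in> P" by (rule gen) (use j in linarith)
    have "d * j \<in> supp_idx a n" using J' j by auto
    then have ext: "(real (d * j), real_of_ereal (a (d * j))) extreme_point_of P"
      using reg unfolding regular_def P_def by blast
    have mid: "midpoint (real (d * (j - 1)), b (j - 1) + \<delta>) (real (d * (j + 1)), b (j + 1) + \<delta>)
        = (real (d * j), real_of_ereal (a (d * j)))"
    proof -
      have "real (d * (j - 1)) + real (d * (j + 1)) = 2 * real (d * j)"
        using j by (cases j) (auto simp: algebra_simps)
      moreover have "real_of_ereal (a (d * j)) = b j" using aJ j by simp
      ultimately show ?thesis unfolding midpoint_def \<delta>_def by (simp add: field_simps)
    qed
    have ne: "(real (d * (j - 1)), b (j - 1) + \<delta>) \<noteq> (real (d * (j + 1)), b (j + 1) + \<delta>)"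
    proof
      assume "(real (d * (j - 1)), b (j - 1) + \<delta>) = (real (d * (j + 1)), b (j + 1) + \<delta>)"
      then have "real (d * (j - 1)) = real (d * (j + 1))" by (simp only: prod.inject)
      then have "d * (j - 1) = d * (j + 1)" by (simp only: of_nat_eq_iff)
      moreover have "d * (j - 1) \<le> d * j" by simp
      ultimately show False using d1 by simp
    qed
    define A1 where "A1 = (real (d * (j - 1)), b (j - 1) + \<delta>)"
    define A2 where "A2 = (real (d * (j + 1)), b (j + 1) + \<delta>)"
    define X where "X = (real (d * j), real_of_ereal (a (d * j)))"
    have "midpoint A1 A2 \<in> open_segment A1 A2" using ne unfolding A1_def A2_def
      by (simp only: midpoint_in_open_segment) simp
    then have "(real (d * j), real_of_ereal (a (d * j))) \<in> open_segment (real (d * (j - 1)), b (j - 1) + \<delta>) (real (d * (j + 1)), b (j + 1) + \<delta>)"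
      using mid unfolding A1_def A2_def by (simp only:)
    then show False using ext P1 P2 unfolding extreme_point_of_def by blast
  qed
  have "regctx a n d m b"
    by unfold_locales (use n_eq d1 m1 aJ anJ conv in auto)
  then show ?thesis by blast
qed

lemma regular_H0:
  assumes reg: "regular a n" and n1: "n \<ge> 1" and ninf: "\<forall>i\<le>n. a i \<noteq> -\<infinity>"
    and a0: "a 0 < \<infinity>" and an: "a n < \<infinity>"
  shows "tropical_entropy a n = 0"
proof -
  obtain d m b where ctx: "regctx a n d m b" using regular_ctx[OF assms] by blast
  have le: "d_seq a n s \<le> n" if "n + 1 \<le> s" for s using regctx.reg_dseq_le[OF ctx that] .
  have "(\<lambda>s. real (d_seq a n s) / real s) \<longlonglongrightarrow> 0"
  proof (rule tendsto_sandwich[of "\<lambda>_. 0" _ _ "\<lambda>s. real n / real s"])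
    show "\<forall>\<^sub>F s in sequentially. 0 \<le> real (d_seq a n s) / real s" by simp
    show "\<forall>\<^sub>F s in sequentially. real (d_seq a n s) / real s \<le> real n / real s"
      using eventually_ge_at_top[of "n + 1"]
      by eventually_elim (use le in \<open>auto intro!: divide_right_mono\<close>)
    show "(\<lambda>_. 0) \<longlonglongrightarrow> (0::real)" by simp
    show "(\<lambda>s. real n / real s) \<longlonglongrightarrow> 0"
      by (rule tendsto_divide_0[OF tendsto_const]) (rule filterlim_at_top_imp_at_infinity[OF filterlim_real_sequentially])
  qed
  then show ?thesis unfolding tropical_entropy_def by (rule limI)
qed

definition Qp :: "nat \<Rightarrow> nat \<Rightarrow> (nat \<Rightarrow> real) \<Rightarrow> (nat \<Rightarrow> real)" where
  "Qp ofs r z = (\<lambda>i. if i \<in> {1..r} then z (i + ofs) else 0)"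

lemma Qp_Rs: "Qp ofs r z \<in> Rs r"
  unfolding Qp_def Rs_def by auto

lemma Qp_D:
  assumes "z \<in> D_set a n N" "ofs + r \<le> N"
  shows "Qp ofs r z \<in> D_set a n r"
  unfolding D_set_def
proof (intro CollectI conjI allI impI)
  show "Qp ofs r z \<in> Rs r" by (rule Qp_Rs)
  fix k assume k: "k + n + 1 \<le> r"
  have "(k + ofs) + n + 1 \<le> N" using k assms(2) by simp
  then obtain i j where ij: "i\<le>n" "j\<le>n" "i \<noteq> j"
     "\<forall>l\<le>n. a i + ereal (z (k+ ofs+1+i)) \<le> a l + ereal (z (k+ ofs+1+l))"
     "\<forall>l\<le>n. a j + ereal (z (k+ ofs+1+j)) \<le> a l + ereal (z (k+ ofs+1+l))"
    using assms(1) unfolding D_set_def by blast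
  have e: "Qp ofs r z (k+1+l) = z (k+ ofs+1+l)" if "l \<le> n" for l
    using that k unfolding Qp_def by (auto simp: algebra_simps)
  show "\<exists>i\<le>n. \<exists>j\<le>n. i \<noteq> j \<and>
         (\<forall>l\<le>n. a i + ereal (Qp ofs r z (k+1+i)) \<le> a l + ereal (Qp ofs r z (k+1+l))) \<and>
         (\<forall>l\<le>n. a j + ereal (Qp ofs r z (k+1+j)) \<le> a l + ereal (Qp ofs r z (k+1+l)))"
    using ij e by (intro exI[of _ i] exI[of _ j]) auto
qed

lemma Qp_lin: "Qp ofs r (\<lambda>i. p i + (\<Sum>j\<in>A. t j * v j i)) = (\<lambda>i. Qp ofs r p i + (\<Sum>j\<in>A. t j * Qp ofs r (v j) i))"
  unfolding Qp_def by (rule ext) auto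

lemma indep_reindex:
  assumes "bij_betw h {..<k} A" "indep w A"
  shows "indep (\<lambda>j. w (h j)) {..<k}"
  unfolding indep_def
proof (intro allI impI)
  fix c assume H: "\<forall>i. (\<Sum>j\<in>{..<k}. c j * w (h j) i) = 0"
  define c' where "c' x = c (inv_into {..<k} h x)" for x
  have "(\<Sum>x\<in>A. c' x * w x i) = (\<Sum>j\<in>{..<k}. c j * w (h j) i)" for i
  proof -
    have "(\<Sum>x\<in>A. c' x * w x i) = (\<Sum>j\<in>{..<k}. c' (h j) * w (h j) i)"
      using sum.reindex_bij_betw[OF assms(1), of "\<lambda>x. c' x * w x i"] by simp
    also have "\<dots> = (\<Sum>j\<in>{..<k}. c j * w (h j) i)"
      using assms(1) by (intro sum.cong) (auto simp: c'_def bij_betw_inv_into_left)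
    finally show ?thesis .
  qed
  then have "\<forall>x\<in>A. c' x = 0" using H assms(2) unfolding indep_def by simp
  show "\<forall>j\<in>{..<k}. c j = 0"
  proof
    fix j assume j: "j \<in> {..<k}"
    have hj: "h j \<in> A" using bij_betwE[OF assms(1)] j by blast
    have "inv_into {..<k} h (h j) = j" by (rule bij_betw_inv_into_left[OF assms(1) j])
    then show "c j = 0" using \<open>\<forall>x\<in>A. c' x = 0\<close> hj unfolding c'_def by force
  qed
qed

lemma sub_simplex:
  assumes p: "p \<in> Rs N" and v: "\<forall>j<m. v j \<in> Rs N"
    and sim: "\<forall>t::nat \<Rightarrow> real. (\<forall>j<m. 0 \<le> t j) \<and> (\<Sum>j<m. t j) \<le> 1 \<longrightarrow>
          (\<lambda>i. p i + (\<Sum>j<m. t j * v j i)) \<in> D_set a n N"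
    and A: "A \<subseteq> {..<m}" "indep (\<lambda>j. Qp ofs r (v j)) A" and N: "ofs + r \<le> N"
  shows "contains_simplex r (D_set a n r) (card A)"
proof -
  have finA: "finite A" using A(1) finite_subset by blast
  obtain h where h: "bij_betw h {..<card A} A"
    using ex_bij_betw_nat_finite[OF finA] by (auto simp: atLeast0LessThan)
  define v' where "v' k = Qp ofs r (v (h k))" for k
  show ?thesis unfolding cs_indep
  proof (intro exI conjI)
    show "Qp ofs r p \<in> Rs r" by (rule Qp_Rs)
    show "\<forall>j<card A. v' j \<in> Rs r" unfolding v'_def using Qp_Rs by blast
    show "indep v' {..<card A}" unfolding v'_def
      by (rule indep_reindex[OF h A(2)])
    show "\<forall>\<tau>::nat \<Rightarrow> real. (\<forall>j<card A. 0 \<le> \<tau> j) \<and> (\<Sum>j<card A. \<tau> j) \<le> 1 \<longrightarrow>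
        (\<lambda>i. Qp ofs r p i + (\<Sum>j<card A. \<tau> j * v' j i)) \<in> D_set a n r"
    proof (intro allI impI)
      fix \<tau> :: "nat \<Rightarrow> real" assume \<tau>: "(\<forall>j<card A. 0 \<le> \<tau> j) \<and> (\<Sum>j<card A. \<tau> j) \<le> 1"
      define t where "t x = (if x \<in> A then \<tau> (inv_into {..<card A} h x) else 0)" for x
      have sumA: "(\<Sum>x\<in>A. g x) = (\<Sum>j<card A. g (h j))" for g :: "nat \<Rightarrow> real"
        using sum.reindex_bij_betw[OF h, of g] by simp
      have tA: "t (h j) = \<tau> j" if "j < card A" for j
        using h that by (auto simp: t_def bij_betw_inv_into_left bij_betwE)
      have summ: "(\<Sum>j<m. g j) = (\<Sum>j\<in>A. g j)" if "\<And>j. j \<notin> A \<Longrightarrow> g j = 0" for g :: "nat \<Rightarrow> real"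
        using A(1) that by (intro sum.mono_neutral_right) auto
      have "(\<forall>j<m. 0 \<le> t j)"
      proof (intro allI impI)
        fix j assume "j < m"
        show "0 \<le> t j"
        proof (cases "j \<in> A")
          case True
          then have "j \<in> h ` {..<card A}" using h by (simp add: bij_betw_def)
          then have "inv_into {..<card A} h j \<in> {..<card A}" by (rule inv_into_into)
          then show ?thesis using \<tau> True by (simp add: t_def)
        qed (simp add: t_def)
      qed
      moreover have "(\<Sum>j<m. t j) = (\<Sum>j<card A. \<tau> j)"
        using summ[of t] sumA[of t] tA by (simp add: t_def)
      ultimately have "(\<lambda>i. p i + (\<Sum>j<m. t j * v j i)) \<in> D_set a n N"
        using sim \<tau> by auto
      then have "Qp ofs r (\<lambda>i. p i + (\<Sum>j<m. t j * v j i)) \<in> D_set a n r"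
        by (rule Qp_D[OF _ N])
      moreover have "Qp ofs r (\<lambda>i. p i + (\<Sum>j<m. t j * v j i)) = (\<lambda>i. Qp ofs r p i + (\<Sum>j<card A. \<tau> j * v' j i))"
      proof
        fix i
        have "(\<Sum>j<m. t j * Qp ofs r (v j) i) = (\<Sum>j\<in>A. t j * Qp ofs r (v j) i)"
          by (rule summ) (simp add: t_def)
        also have "\<dots> = (\<Sum>j<card A. t (h j) * Qp ofs r (v (h j)) i)" by (rule sumA)
        also have "\<dots> = (\<Sum>j<card A. \<tau> j * v' j i)" using tA by (simp add: v'_def)
        finally show "Qp ofs r (\<lambda>i. p i + (\<Sum>j<m. t j * v j i)) i = Qp ofs r p i + (\<Sum>j<card A. \<tau> j * v' j i)"
          unfolding Qp_lin by simp
      qed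
      ultimately show "(\<lambda>i. Qp ofs r p i + (\<Sum>j<card A. \<tau> j * v' j i)) \<in> D_set a n r" by simp
    qed
  qed
qed


lemma max_indep:
  "\<exists>A\<subseteq>{..<m}. indep w A \<and> (\<forall>j<m. \<exists>\<beta>. \<forall>i. w j i = (\<Sum>a\<in>A. \<beta> a * w a i))"
proof -
  define AA where "AA = {A. A \<subseteq> {..<m} \<and> indep w A}"
  have finAA: "finite AA" unfolding AA_def by (rule finite_subset[of _ "Pow {..<m}"]) auto
  have "{} \<in> AA" unfolding AA_def indep_def by simp
  then have ne: "card ` AA \<noteq> {}" by blast
  obtain A where A: "A \<in> AA" "card A = Max (card ` AA)"
    using Max_in[OF finite_imageI[OF finAA] ne] by auto
  have Asub: "A \<subseteq> {..<m}" and Aind: "indep w A" using A(1) unfolding AA_def by auto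
  have finA: "finite A" using Asub finite_subset by blast
  have "\<exists>\<beta>. \<forall>i. w j i = (\<Sum>a\<in>A. \<beta> a * w a i)" if j: "j < m" for j
  proof (cases "j \<in> A")
    case True
    have "w j i = (\<Sum>a\<in>A. (if a = j then 1 else 0) * w a i)" for i
    proof -
      have "(\<Sum>a\<in>A. (if a = j then 1 else 0) * w a i) = (\<Sum>a\<in>A. if a = j then w a i else 0)"
        by (rule sum.cong) auto
      then show ?thesis using True finA by simp
    qed
    then show ?thesis by (intro exI[of _ "\<lambda>a. if a = j then 1 else 0"]) blast
  next
    case False
    have "insert j A \<notin> AA"
    proof
      assume "insert j A \<in> AA"
      then have "card (insert j A) \<le> Max (card ` AA)" using finAA by simp
      then show False using A(2) False finA by simp
    qed
    then have "\<not> indep w (insert j A)" using Asub j unfolding AA_def by auto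
    then obtain c where c: "\<forall>i. (\<Sum>x\<in>insert j A. c x * w x i) = 0" "\<exists>x\<in>insert j A. c x \<noteq> 0"
      unfolding indep_def by blast
    have sumsplit: "(\<Sum>x\<in>insert j A. c x * w x i) = c j * w j i + (\<Sum>x\<in>A. c x * w x i)" for i
      using False finA by simp
    have cj: "c j \<noteq> 0"
    proof
      assume cj0: "c j = 0"
      then have "\<forall>i. (\<Sum>x\<in>A. c x * w x i) = 0" using c(1) sumsplit by simp
      then have "\<forall>x\<in>A. c x = 0" using Aind unfolding indep_def by blast
      then show False using c(2) cj0 by auto
    qed
    have "w j i = (\<Sum>a\<in>A. (- c a / c j) * w a i)" for i
    proof -
      have "c j * w j i = - (\<Sum>x\<in>A. c x * w x i)" using c(1) sumsplit[of i] by simp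
      then have "w j i = - (\<Sum>x\<in>A. c x * w x i) / c j" using cj by (simp add: field_simps)
      also have "\<dots> = (\<Sum>a\<in>A. (- c a / c j) * w a i)"
        by (simp add: sum_divide_distrib sum_negf[symmetric])
      finally show ?thesis .
    qed
    then show ?thesis by (intro exI[of _ "\<lambda>a. - c a / c j"]) blast
  qed
  then show ?thesis using Asub Aind by blast
qed

lemma rank_add:
  assumes v: "\<forall>j<m. v j \<in> Rs (s + t)" and ind: "indep v {..<m}"
    and A: "A \<subseteq> {..<m}" "\<forall>j<m. \<exists>\<beta>. \<forall>i. Qp 0 s (v j) i = (\<Sum>a\<in>A. \<beta> a * Qp 0 s (v a) i)"
    and B: "B \<subseteq> {..<m}" "\<forall>j<m. \<exists>\<gamma>. \<forall>i. Qp s t (v j) i = (\<Sum>b\<in>B. \<gamma> b * Qp s t (v b) i)"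
  shows "m \<le> card A + card B"
proof -
  have finA: "finite A" and finB: "finite B" using A(1) B(1) finite_subset by auto
  obtain \<beta> where \<beta>: "\<And>j i. j < m \<Longrightarrow> Qp 0 s (v j) i = (\<Sum>a\<in>A. \<beta> j a * Qp 0 s (v a) i)"
    using A(2) by metis
  obtain \<gamma> where \<gamma>: "\<And>j i. j < m \<Longrightarrow> Qp s t (v j) i = (\<Sum>b\<in>B. \<gamma> j b * Qp s t (v b) i)"
    using B(2) by metis
  define E where "E b i = (if i > s then Qp s t (v b) (i - s) else 0)" for b i
  have dec: "v j i = Qp 0 s (v j) i + E j i" if "j < m" for j i
  proof -
    have "v j \<in> Rs (s + t)" using v that by blast
    then have z: "i \<notin> {1..s+t} \<Longrightarrow> v j i = 0" unfolding Rs_def by blast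
    show ?thesis unfolding E_def Qp_def using z by auto
  qed
  have dec2: "v j i = (\<Sum>a\<in>A. \<beta> j a * Qp 0 s (v a) i) + (\<Sum>b\<in>B. \<gamma> j b * E b i)" if "j < m" for j i
  proof -
    have "E j i = (\<Sum>b\<in>B. \<gamma> j b * E b i)"
      unfolding E_def using \<gamma>[OF that] by (simp add: sum.If_cases)
    then show ?thesis using dec[OF that] \<beta>[OF that] by simp
  qed
  define \<rho> where "\<rho> j x = (if x \<in> A then \<beta> j x else 0) + (if m \<le> x \<and> x - m \<in> B then \<gamma> j (x - m) else 0)" for j x
  have "indep \<rho> {..<m}"
    unfolding indep_def
  proof (intro allI impI)
    fix c assume H: "\<forall>x. (\<Sum>j\<in>{..<m}. c j * \<rho> j x) = 0"
    have hA: "(\<Sum>j<m. c j * \<beta> j a) = 0" if "a \<in> A" for a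
    proof -
      have "a < m" using A(1) that by auto
      then show ?thesis using H[rule_format, of a] that by (simp add: \<rho>_def)
    qed
    have hB: "(\<Sum>j<m. c j * \<gamma> j b) = 0" if "b \<in> B" for b
    proof -
      have "b + m \<notin> A" using A(1) by auto
      then show ?thesis using H[rule_format, of "b + m"] that by (simp add: \<rho>_def)
    qed
    have "(\<Sum>j\<in>{..<m}. c j * v j i) = 0" for i
    proof -
      have "(\<Sum>j\<in>{..<m}. c j * v j i)
          = (\<Sum>j<m. (\<Sum>a\<in>A. c j * \<beta> j a * Qp 0 s (v a) i) + (\<Sum>b\<in>B. c j * \<gamma> j b * E b i))"
        by (rule sum.cong) (simp_all add: dec2 sum_distrib_left distrib_left mult.assoc)
      also have "\<dots> = (\<Sum>a\<in>A. (\<Sum>j<m. c j * \<beta> j a) * Qp 0 s (v a) i) + (\<Sum>b\<in>B. (\<Sum>j<m. c j * \<gamma> j b) * E b i)"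
        by (simp add: sum.distrib sum_distrib_right sum.swap[of _ A] sum.swap[of _ B])
      also have "\<dots> = 0" using hA hB by simp
      finally show ?thesis .
    qed
    then show "\<forall>j\<in>{..<m}. c j = 0" using ind unfolding indep_def by blast
  qed
  moreover have "\<forall>j\<in>{..<m}. \<forall>q. q \<notin> A \<union> (\<lambda>b. b + m) ` B \<longrightarrow> \<rho> j q = 0"
  proof (intro ballI allI impI)
    fix j q assume q: "q \<notin> A \<union> (\<lambda>b. b + m) ` B"
    have "\<not> (m \<le> q \<and> q - m \<in> B)"
    proof
      assume "m \<le> q \<and> q - m \<in> B"
      then have "q \<in> (\<lambda>b. b + m) ` B" by (metis image_eqI le_add_diff_inverse2)
      then show False using q by blast
    qed
    then show "\<rho> j q = 0" using q unfolding \<rho>_def by auto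
  qed
  ultimately have "card {..<m} \<le> card (A \<union> (\<lambda>b. b + m) ` B)"
    using lin_bound[of "A \<union> (\<lambda>b. b + m) ` B" "{..<m}" \<rho>] finA finB by blast
  also have "\<dots> \<le> card A + card ((\<lambda>b. b + m) ` B)" by (rule card_Un_le)
  also have "\<dots> \<le> card A + card B" using card_image_le[OF finB] by simp
  finally show ?thesis by simp
qed

lemma subadd: "d_seq a n (s + t) \<le> d_seq a n s + d_seq a n t"
proof (cases "\<exists>m. contains_simplex (s + t) (D_set a n (s + t)) m")
  case False
  then have "{m. contains_simplex (s + t) (D_set a n (s + t)) m} = {}" by blast
  then have "d_seq a n (s + t) = 0" unfolding d_seq_def set_dim_def by (simp only: Sup_nat_empty)
  then show ?thesis by simp
next
  case True
  then obtain m0 where "contains_simplex (s + t) (D_set a n (s + t)) m0" by blast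
  then have cs: "contains_simplex (s + t) (D_set a n (s + t)) (d_seq a n (s + t))"
    unfolding d_seq_def by (rule dim_attained)
  obtain p v where pv: "p \<in> Rs (s+t)" "\<forall>j<d_seq a n (s + t). v j \<in> Rs (s+t)" "indep v {..<d_seq a n (s + t)}"
    and sim: "\<forall>t'::nat \<Rightarrow> real. (\<forall>j<d_seq a n (s + t). 0 \<le> t' j) \<and> (\<Sum>j<d_seq a n (s + t). t' j) \<le> 1 \<longrightarrow>
          (\<lambda>i. p i + (\<Sum>j<d_seq a n (s + t). t' j * v j i)) \<in> D_set a n (s+t)"
    using cs unfolding cs_indep by blast
  obtain A where A: "A \<subseteq> {..<d_seq a n (s + t)}" "indep (\<lambda>j. Qp 0 s (v j)) A"
      "\<forall>j<d_seq a n (s + t). \<exists>\<beta>. \<forall>i. Qp 0 s (v j) i = (\<Sum>a\<in>A. \<beta> a * Qp 0 s (v a) i)"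
    using max_indep[of "d_seq a n (s + t)" "\<lambda>j. Qp 0 s (v j)"] by blast
  obtain B where B: "B \<subseteq> {..<d_seq a n (s + t)}" "indep (\<lambda>j. Qp s t (v j)) B"
      "\<forall>j<d_seq a n (s + t). \<exists>\<beta>. \<forall>i. Qp s t (v j) i = (\<Sum>a\<in>B. \<beta> a * Qp s t (v a) i)"
    using max_indep[of "d_seq a n (s + t)" "\<lambda>j. Qp s t (v j)"] by blast
  have "contains_simplex s (D_set a n s) (card A)"
    by (rule sub_simplex[OF pv(1,2) sim A(1,2)]) simp
  then have cA: "card A \<le> d_seq a n s" unfolding d_seq_def by (rule dim_ge)
  have "contains_simplex t (D_set a n t) (card B)"
    by (rule sub_simplex[OF pv(1,2) sim B(1,2)]) simp
  then have cB: "card B \<le> d_seq a n t" unfolding d_seq_def by (rule dim_ge)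
  have "d_seq a n (s + t) \<le> card A + card B"
    by (rule rank_add[OF pv(2,3) A(1,3) B(1,3)])
  then show ?thesis using cA cB by simp
qed


lemma subadd_iter:
  fixes f :: "nat \<Rightarrow> real"
  assumes sa: "\<And>s t. f (s + t) \<le> f s + f t"
  shows "f (k * q + r) \<le> real k * f q + f r"
proof (induction k)
  case 0 then show ?case by simp
next
  case (Suc k)
  have "f (Suc k * q + r) = f (q + (k * q + r))" by (simp add: algebra_simps)
  also have "\<dots> \<le> f q + f (k * q + r)" by (rule sa)
  also have "\<dots> \<le> f q + (real k * f q + f r)" using Suc by simp
  finally show ?case by (simp add: algebra_simps)
qed

lemma fekete:
  fixes f :: "nat \<Rightarrow> real"
  assumes sa: "\<And>s t. f (s + t) \<le> f s + f t" and nn: "\<And>s. 0 \<le> f s"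
  shows "convergent (\<lambda>s. f s / real s)"
proof -
  define X where "X = {f s / real s | s. s \<ge> 1}"
  define L where "L = Inf X"
  have Xne: "X \<noteq> {}" unfolding X_def by blast
  have Xbdd: "bdd_below X" unfolding X_def bdd_below_def using nn by (intro exI[of _ 0]) auto
  have low: "L \<le> f s / real s" if "s \<ge> 1" for s
    unfolding L_def by (rule cInf_lower[OF _ Xbdd]) (use that in \<open>auto simp: X_def\<close>)
  have "(\<lambda>s. f s / real s) \<longlonglongrightarrow> L"
  proof (rule LIMSEQ_I)
    fix r :: real assume r: "0 < r"
    have "Inf X < L + r / 2" unfolding L_def using r by simp
    then obtain x where "x \<in> X" "x < L + r / 2" using cInf_less_iff[OF Xne Xbdd] by blast
    then obtain q where q: "q \<ge> 1" "f q / real q < L + r / 2" unfolding X_def by blast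
    define M where "M = (\<Sum>i<q. f i)"
    have M0: "0 \<le> M" unfolding M_def using nn by (simp add: sum_nonneg)
    have fr: "f i \<le> M" if "i < q" for i
      unfolding M_def using that nn by (intro member_le_sum) auto
    obtain N :: nat where N: "N > 2 * M / r" using reals_Archimedean2 by blast
    show "\<exists>no. \<forall>s\<ge>no. norm (f s / real s - L) < r"
    proof (intro exI[of _ "N + 1"] allI impI)
      fix s assume s: "s \<ge> N + 1"
      then have s1: "s \<ge> 1" and spos: "real s > 0" by auto
      have sdec: "s = (s div q) * q + s mod q" by simp
      have "f s \<le> real (s div q) * f q + f (s mod q)"
        using subadd_iter[OF sa, of "s div q" q "s mod q"] sdec by simp
      also have "f (s mod q) \<le> M" using fr q(1) by simp
      finally have fs: "f s \<le> real (s div q) * f q + M" by simp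
      have "(s div q) * q \<le> s" by (simp add: div_times_less_eq_dividend)
      then have "real (s div q) * real q \<le> real s"
        by (metis of_nat_le_iff of_nat_mult)
      then have "real (s div q) * f q \<le> real s * (f q / real q)"
      proof -
        have "real (s div q) * real q * f q \<le> real s * f q" using nn[of q] \<open>real (s div q) * real q \<le> real s\<close>
          by (rule mult_right_mono[rotated])
        then show ?thesis using q(1) by (simp add: field_simps)
      qed
      then have "f s \<le> real s * (f q / real q) + M" using fs by simp
      then have "f s / real s \<le> f q / real q + M / real s" using spos by (simp add: field_simps)
      moreover have "M / real s < r / 2"
      proof -
        have "real s > 2 * M / r" using N s by linarith
        then have "real s * r > 2 * M" using r by (simp add: field_simps)
        then show ?thesis using spos by (simp add: field_simps)
      qed
      ultimately have "f s / real s < L + r" using q(2) by linarith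
      moreover have "L \<le> f s / real s" by (rule low[OF s1])
      ultimately show "norm (f s / real s - L) < r" by simp
    qed
  qed
  then show ?thesis unfolding convergent_def by blast
qed

lemma dseq_convergent: "convergent (\<lambda>s. real (d_seq a n s) / real s)"
  by (rule fekete) (use subadd in \<open>simp_all add: of_nat_add[symmetric] del: of_nat_add\<close>)

lemma card_lt_Suc: "card {x. x < Suc N \<and> P x} = card {x. x < N \<and> P x} + (if P N then 1 else 0)"
proof -
  have "{x. x < Suc N \<and> P x} = {x. x < N \<and> P x} \<union> (if P N then {N} else {})" by (auto simp: less_Suc_eq)
  then show ?thesis by auto
qed
lemma count_even:
  assumes d: "(\<delta>::nat) \<ge> 1"
  shows "2 * card {\<rho>. \<rho> < N \<and> even (\<rho> div \<delta>)} =
    (if even (N div \<delta>) then (N div \<delta>) * \<delta> + 2 * (N mod \<delta>) else (N div \<delta> + 1) * \<delta>)"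
proof (induction N)
  case 0 then show ?case by simp
next
  case (Suc N)
  have m: "N mod \<delta> < \<delta>" using d by simp
  show ?case
  proof (cases "Suc (N mod \<delta>) = \<delta>")
    case True
    then have e1: "Suc N div \<delta> = Suc (N div \<delta>)" "Suc N mod \<delta> = 0" by (simp_all add: div_Suc mod_Suc)
    show ?thesis using Suc.IH True unfolding card_lt_Suc e1 by (auto simp: algebra_simps)
  next
    case False
    then have e1: "Suc N div \<delta> = N div \<delta>" "Suc N mod \<delta> = Suc (N mod \<delta>)" by (simp_all add: div_Suc mod_Suc)
    show ?thesis using Suc.IH False unfolding card_lt_Suc e1 by (auto simp: algebra_simps)
  qed
qed

lemma count_even_ge:
  assumes d: "(\<delta>::nat) \<ge> 1" and N: "N \<ge> \<delta>"
  shows "N + \<delta> \<le> 3 * card {\<rho>. \<rho> < N \<and> even (\<rho> div \<delta>)}"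
proof -
  define q where "q = N div \<delta>"
  define r where "r = N mod \<delta>"
  have Nq: "N = q * \<delta> + r" unfolding q_def r_def by simp
  have r: "r < \<delta>" unfolding r_def using d by simp
  have q1: "q \<ge> 1" using Nq r N by (cases q) auto
  have E: "2 * card {\<rho>. \<rho> < N \<and> even (\<rho> div \<delta>)} = (if even q then q * \<delta> + 2 * r else (q + 1) * \<delta>)"
    using count_even[OF d, of N] unfolding q_def r_def .
  show ?thesis
  proof (cases "even q")
    case True
    then have q2: "q \<ge> 2" using q1 by presburger
    then have a1: "2 * \<delta> \<le> q * \<delta>" by simp
    have a2: "2 * card {\<rho>. \<rho> < N \<and> even (\<rho> div \<delta>)} = q * \<delta> + 2 * r" using E True by simp
    show ?thesis using a1 a2 Nq by linarith
  next
    case False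
    have b1: "\<delta> \<le> q * \<delta>" using q1 by simp
    have b2: "(q + 1) * \<delta> = q * \<delta> + \<delta>" by simp
    have b3: "2 * card {\<rho>. \<rho> < N \<and> even (\<rho> div \<delta>)} = (q + 1) * \<delta>" using E False by simp
    show ?thesis using b1 b2 b3 Nq r by linarith
  qed
qed


lemma goodR:
  assumes d1: "1 \<le> (\<delta>::nat)" and dg: "\<delta> < g"
  shows "\<exists>R\<subseteq>{..<g}. g \<le> 3 * card {\<rho>. \<rho> < g \<and> \<rho> \<notin> R \<and> (\<rho> + \<delta>) mod g \<in> R}"
proof (cases "2 * \<delta> \<le> g")
  case True
  define R where "R = {\<rho>. \<rho> < g \<and> odd (\<rho> div \<delta>)}"
  define S0 where "S0 = {\<rho>. \<rho> < g - \<delta> \<and> even (\<rho> div \<delta>)}"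
  have sub: "S0 \<subseteq> {\<rho>. \<rho> < g \<and> \<rho> \<notin> R \<and> (\<rho> + \<delta>) mod g \<in> R}"
  proof
    fix \<rho> assume "\<rho> \<in> S0"
    then have r: "\<rho> < g - \<delta>" "even (\<rho> div \<delta>)" unfolding S0_def by auto
    have "(\<rho> + \<delta>) mod g = \<rho> + \<delta>" using r(1) by simp
    moreover have "(\<rho> + \<delta>) div \<delta> = \<rho> div \<delta> + 1" using d1 by (simp add: div_add_self2)
    ultimately show "\<rho> \<in> {\<rho>. \<rho> < g \<and> \<rho> \<notin> R \<and> (\<rho> + \<delta>) mod g \<in> R}"
      using r unfolding R_def by auto
  qed
  have "g - \<delta> + \<delta> \<le> 3 * card S0" unfolding S0_def by (rule count_even_ge[OF d1]) (use True in simp)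
  moreover have "card S0 \<le> card {\<rho>. \<rho> < g \<and> \<rho> \<notin> R \<and> (\<rho> + \<delta>) mod g \<in> R}"
    by (rule card_mono[OF _ sub]) simp
  ultimately show ?thesis using dg unfolding R_def by (intro exI[of _ R]) (auto simp: R_def)
next
  case False
  define \<delta>' where "\<delta>' = g - \<delta>"
  have d1': "1 \<le> \<delta>'" and g': "\<delta>' \<le> g - \<delta>'" using False dg unfolding \<delta>'_def by auto
  define R where "R = {\<rho>. \<rho> < g \<and> even (\<rho> div \<delta>')}"
  define S0 where "S0 = {\<rho>. \<rho> < g - \<delta>' \<and> even (\<rho> div \<delta>')}"
  have sub: "(\<lambda>\<rho>. \<rho> + \<delta>') ` S0 \<subseteq> {\<rho>. \<rho> < g \<and> \<rho> \<notin> R \<and> (\<rho> + \<delta>) mod g \<in> R}"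
  proof
    fix x assume "x \<in> (\<lambda>\<rho>. \<rho> + \<delta>') ` S0"
    then obtain \<rho> where r: "\<rho> < g - \<delta>'" "even (\<rho> div \<delta>')" "x = \<rho> + \<delta>'" unfolding S0_def by auto
    have "(x + \<delta>) mod g = \<rho>" using r dg unfolding \<delta>'_def by simp
    moreover have "x div \<delta>' = \<rho> div \<delta>' + 1" using d1' r(3) by (simp add: div_add_self2)
    moreover have "x < g" using r by simp
    ultimately show "x \<in> {\<rho>. \<rho> < g \<and> \<rho> \<notin> R \<and> (\<rho> + \<delta>) mod g \<in> R}"
      using r unfolding R_def by auto
  qed
  have "g - \<delta>' + \<delta>' \<le> 3 * card S0" unfolding S0_def by (rule count_even_ge[OF d1' g'])
  moreover have "card S0 = card ((\<lambda>\<rho>. \<rho> + \<delta>') ` S0)" by (simp add: card_image)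
  moreover have "card ((\<lambda>\<rho>. \<rho> + \<delta>') ` S0) \<le> card {\<rho>. \<rho> < g \<and> \<rho> \<notin> R \<and> (\<rho> + \<delta>) mod g \<in> R}"
    by (rule card_mono[OF _ sub]) simp
  ultimately show ?thesis using dg \<delta>'_def by (intro exI[of _ R]) (auto simp: R_def)
qed

locale lbctx =
  fixes a :: "nat \<Rightarrow> ereal" and n u w rs g \<delta> :: nat and \<alpha> \<beta> c :: real and R :: "nat set"
  assumes uw: "u < w" "w \<le> n" "rs \<le> n" and g_def: "g = w - u"
    and au: "a u = ereal (\<alpha> + \<beta> * real u)" and aw: "a w = ereal (\<alpha> + \<beta> * real w)"
    and sup: "\<And>i. i \<le> n \<Longrightarrow> ereal (\<alpha> + \<beta> * real i) \<le> a i"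
    and ars: "a rs = ereal (\<alpha> + \<beta> * real rs + c)"
    and cmin: "\<And>i. i \<le> n \<Longrightarrow> a i < \<infinity> \<Longrightarrow> i mod g \<noteq> u mod g \<Longrightarrow> ereal (\<alpha> + \<beta> * real i + c) \<le> a i"
    and c0: "0 \<le> c"
    and rsu: "rs mod g \<noteq> u mod g"
    and \<delta>: "(u + \<delta>) mod g = rs mod g"
    and Rsub: "R \<subseteq> {..<g}"
    and Rgood: "g \<le> 3 * card {\<rho>. \<rho> < g \<and> \<rho> \<notin> R \<and> (\<rho> + \<delta>) mod g \<in> R}"
begin

lemma g_pos: "g \<ge> 1" using uw g_def by simp

definition Good :: "nat \<Rightarrow> bool" where
  "Good \<rho> \<longleftrightarrow> \<rho> < g \<and> \<rho> \<notin> R \<and> (\<rho> + \<delta>) mod g \<in> R"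

definition lev :: "nat \<Rightarrow> real" where
  "lev q = (if q mod g \<in> R then 0 else if Good (q mod g) \<and> odd (q div g) then c + 1 else c)"

definition pp :: "nat \<Rightarrow> nat \<Rightarrow> real" where
  "pp s q = (if q \<in> {1..s} then lev q - \<beta> * real q else 0)"

definition FF :: "nat \<Rightarrow> nat set" where
  "FF s = {q \<in> {1..s}. Good (q mod g) \<and> odd (q div g)}"

lemma lev_nn: "0 \<le> lev q" using c0 unfolding lev_def by auto

lemma core:
  assumes zR: "z \<in> Rs s" and zF: "\<And>q. q \<in> {1..s} \<Longrightarrow> q \<notin> FF s \<Longrightarrow> z q = pp s q"
    and zF2: "\<And>q. q \<in> FF s \<Longrightarrow> pp s q \<le> z q"
  shows "z \<in> D_set a n s"
  unfolding D_set_def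
proof (intro CollectI conjI allI impI)
  show "z \<in> Rs s" by (rule zR)
  fix k assume k: "k + n + 1 \<le> s"
  define \<kappa> where "\<kappa> = \<alpha> - \<beta> * real (k + 1)"
  define x where "x = k + 1 + u"
  have Pin: "k + 1 + l \<in> {1..s}" if "l \<le> n" for l using that k by auto
  have zge: "pp s (k+1+l) \<le> z (k+1+l)" if "l \<le> n" for l
    using zF[OF Pin[OF that]] zF2 by (cases "k+1+l \<in> FF s") auto
  have ppP: "pp s (k+1+l) = lev (k+1+l) - \<beta> * real (k+1+l)" if "l \<le> n" for l
    using Pin[OF that] unfolding pp_def by simp
  have lb: "ereal (\<kappa> + lev (k+1+l)) \<le> a l + ereal (z (k+1+l))" if l: "l \<le> n" for l
  proof (cases "a l")
    case (real r)
    have "\<alpha> + \<beta> * real l \<le> r" using sup[OF l] real by simp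
    moreover have "lev (k+1+l) - \<beta> * real (k+1+l) \<le> z (k+1+l)" using zge[OF l] ppP[OF l] by simp
    ultimately have "\<kappa> + lev (k+1+l) \<le> r + z (k+1+l)" unfolding \<kappa>_def by (simp add: algebra_simps)
    then show ?thesis using real by simp
  qed (use sup[OF l] in auto)
  have lbc: "ereal (\<kappa> + c + lev (k+1+l)) \<le> a l + ereal (z (k+1+l))"
    if l: "l \<le> n" and fin: "a l < \<infinity>" and md: "l mod g \<noteq> u mod g" for l
  proof (cases "a l")
    case (real r)
    have "\<alpha> + \<beta> * real l + c \<le> r" using cmin[OF l fin md] real by simp
    moreover have "lev (k+1+l) - \<beta> * real (k+1+l) \<le> z (k+1+l)" using zge[OF l] ppP[OF l] by simp
    ultimately have "\<kappa> + c + lev (k+1+l) \<le> r + z (k+1+l)" unfolding \<kappa>_def by (simp add: algebra_simps)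
    then show ?thesis using real by simp
  qed (use fin sup[OF l] in auto)
  have exact: "a l + ereal (z (k+1+l)) = ereal (\<kappa> + e + lev (k+1+l))"
    if l: "l \<le> n" and nF: "k+1+l \<notin> FF s" and al: "a l = ereal (\<alpha> + \<beta> * real l + e)" for l e
  proof -
    have "z (k+1+l) = lev (k+1+l) - \<beta> * real (k+1+l)" using zF[OF Pin[OF l] nF] ppP[OF l] by simp
    then show ?thesis using al unfolding \<kappa>_def by (simp add: algebra_simps)
  qed
  have au': "a u = ereal (\<alpha> + \<beta> * real u + 0)" using au by simp
  have aw': "a w = ereal (\<alpha> + \<beta> * real w + 0)" using aw by simp
  have un: "u \<le> n" using uw by simp
  have wn: "w \<le> n" using uw by simp
  have rsn: "rs \<le> n" using uw by simp
  have xw: "k + 1 + w = x + g" unfolding x_def g_def using uw by simp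
  have xmodw: "(x + g) mod g = x mod g" by simp
  have xdivw: "(x + g) div g = x div g + 1" using g_pos by simp
  have notFF: "q \<notin> FF s" if "\<not> (Good (q mod g) \<and> odd (q div g))" for q
    using that unfolding FF_def by auto
  have wmod: "w mod g = u mod g"
  proof -
    have "w = u + g" using uw g_def by simp
    then show ?thesis by simp
  qed
  have rs_ne: "rs \<noteq> u" "rs \<noteq> w" using rsu wmod by auto
  have uw_ne: "u \<noteq> w" using uw by simp
  have ix: "(k + 1 + rs) mod g = (x mod g + \<delta>) mod g"
  proof -
    have "(k + 1 + rs) mod g = (k + 1 + rs mod g) mod g" using mod_add_right_eq[of "k+1" rs g] by simp
    also have "\<dots> = (k + 1 + (u + \<delta>) mod g) mod g" using \<delta> by simp
    also have "\<dots> = (x + \<delta>) mod g" unfolding x_def using mod_add_right_eq[of "k+1" "u + \<delta>" g] by (simp add: add.assoc)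
    also have "\<dots> = (x mod g + \<delta>) mod g" using mod_add_left_eq[of x g \<delta>] by simp
    finally show ?thesis .
  qed
  have samecls: "(k + 1 + l) mod g = x mod g" if "l mod g = u mod g" for l
  proof -
    have "(k + 1 + l) mod g = (k + 1 + l mod g) mod g" using mod_add_right_eq[of "k+1" l g] by simp
    also have "\<dots> = (k + 1 + u mod g) mod g" using that by simp
    also have "\<dots> = x mod g" unfolding x_def using mod_add_right_eq[of "k+1" u g] by simp
    finally show ?thesis .
  qed
  show "\<exists>i\<le>n. \<exists>j\<le>n. i \<noteq> j \<and>
         (\<forall>l\<le>n. a i + ereal (z (k+1+i)) \<le> a l + ereal (z (k+1+l))) \<and>
         (\<forall>l\<le>n. a j + ereal (z (k+1+j)) \<le> a l + ereal (z (k+1+l)))"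
  proof (cases "x mod g \<in> R")
    case True
    have lx: "lev x = 0" using True unfolding lev_def by simp
    have lxg: "lev (x + g) = 0" using True xmodw unfolding lev_def by simp
    have nFx: "x \<notin> FF s" by (rule notFF) (use True in \<open>auto simp: Good_def\<close>)
    have nFxg: "x + g \<notin> FF s" by (rule notFF) (use True xmodw in \<open>auto simp: Good_def\<close>)
    have tu: "a u + ereal (z (k+1+u)) = ereal \<kappa>"
      using exact[OF un _ au'] nFx lx unfolding x_def by simp
    have tw: "a w + ereal (z (k+1+w)) = ereal \<kappa>"
      using exact[OF wn _ aw'] nFxg lxg xw by simp
    have "ereal \<kappa> \<le> a l + ereal (z (k+1+l))" if "l \<le> n" for l
      using lb[OF that] lev_nn[of "k+1+l"] by (meson ereal_less_eq(3) le_add_same_cancel1 order_trans)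
    then show ?thesis using tu tw un wn uw_ne by metis
  next
    case False
    have gec: "ereal (\<kappa> + c) \<le> a l + ereal (z (k+1+l))" if l: "l \<le> n" for l
    proof (cases "a l < \<infinity>")
      case fin: True
      show ?thesis
      proof (cases "l mod g = u mod g")
        case True
        then have "(k+1+l) mod g \<notin> R" using samecls False by simp
        then have "c \<le> lev (k+1+l)" unfolding lev_def by auto
        then show ?thesis using lb[OF l] by (meson add_left_mono ereal_less_eq(3) order_trans)
      next
        case False
        then show ?thesis using lbc[OF l fin False] lev_nn[of "k+1+l"]
          by (meson ereal_less_eq(3) le_add_same_cancel1 order_trans)
      qed
    next
      case False
      then have "a l = \<infinity>" by (simp add: top.not_eq_extremum)
      then show ?thesis by simp
    qed
    show ?thesis
    proof (cases "Good (x mod g)")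
      case G: True
      have rsR: "(k + 1 + rs) mod g \<in> R" using G ix unfolding Good_def by simp
      have lrs: "lev (k + 1 + rs) = 0" using rsR unfolding lev_def by simp
      have nFrs: "k + 1 + rs \<notin> FF s" by (rule notFF) (use rsR in \<open>auto simp: Good_def\<close>)
      have trs: "a rs + ereal (z (k+1+rs)) = ereal (\<kappa> + c)"
        using exact[OF rsn nFrs ars] lrs by simp
      show ?thesis
      proof (cases "odd (x div g)")
        case True
        have "\<not> (Good ((x+g) mod g) \<and> odd ((x+g) div g))" using True xdivw by simp
        then have nFxg: "x + g \<notin> FF s" by (rule notFF)
        have lxg: "lev (x + g) = c" using False xmodw xdivw True unfolding lev_def by simp
        have tw: "a w + ereal (z (k+1+w)) = ereal (\<kappa> + c)"
          using exact[OF wn _ aw'] nFxg lxg xw by simp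
        show ?thesis using tw trs gec wn rsn rs_ne by metis
      next
        case odd: False
        have nFx: "x \<notin> FF s" by (rule notFF) (use odd in simp)
        have lx: "lev x = c" using False odd unfolding lev_def by simp
        have tu: "a u + ereal (z (k+1+u)) = ereal (\<kappa> + c)"
          using exact[OF un _ au'] nFx lx unfolding x_def by simp
        show ?thesis using tu trs gec un rsn rs_ne by metis
      qed
    next
      case NG: False
      have nFx: "x \<notin> FF s" by (rule notFF) (use NG in simp)
      have nFxg: "x + g \<notin> FF s" by (rule notFF) (use NG xmodw in simp)
      have lx: "lev x = c" using False NG unfolding lev_def by simp
      have lxg: "lev (x + g) = c" using False NG xmodw unfolding lev_def by simp
      have tu: "a u + ereal (z (k+1+u)) = ereal (\<kappa> + c)"
        using exact[OF un _ au'] nFx lx unfolding x_def by simp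
      have tw: "a w + ereal (z (k+1+w)) = ereal (\<kappa> + c)"
        using exact[OF wn _ aw'] nFxg lxg xw by simp
      show ?thesis using tu tw gec un wn uw_ne by metis
    qed
  qed
qed


lemma FF_sub: "FF s \<subseteq> {1..s}" unfolding FF_def by auto

lemma cs_FF: "contains_simplex s (D_set a n s) (card (FF s))"
proof -
  have fin: "finite (FF s)" using FF_sub finite_subset by blast
  obtain h where h: "bij_betw h {..<card (FF s)} (FF s)"
    using ex_bij_betw_nat_finite[OF fin] by (auto simp: atLeast0LessThan)
  have hF: "h j \<in> FF s" if "j < card (FF s)" for j using h that by (auto simp: bij_betw_def)
  have hinj: "h j = h j' \<Longrightarrow> j < card (FF s) \<Longrightarrow> j' < card (FF s) \<Longrightarrow> j = j'" for j j'
    using h by (auto simp: bij_betw_def inj_on_def)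
  define v where "v j i = (if i = h j then 1 else (0::real))" for j i
  have sumv: "(\<Sum>j<card (FF s). t j * v j i) = (if i \<in> FF s then t (inv_into {..<card (FF s)} h i) else 0)" for t i
  proof (cases "i \<in> FF s")
    case True
    then have "i \<in> h ` {..<card (FF s)}" using h by (simp add: bij_betw_def)
    then obtain j0 where j0: "j0 < card (FF s)" "i = h j0" by auto
    have "(\<Sum>j<card (FF s). t j * v j i) = (\<Sum>j<card (FF s). if j = j0 then t j else 0)"
      using hinj j0 by (intro sum.cong) (auto simp: v_def)
    also have "\<dots> = t j0" using j0 by simp
    finally show ?thesis using True j0 h by (simp add: bij_betw_inv_into_left)
  next
    case False
    have "(\<Sum>j<card (FF s). t j * v j i) = 0"
      using hF False by (intro sum.neutral) (auto simp: v_def)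
    then show ?thesis using False by simp
  qed
  show ?thesis unfolding cs_indep
  proof (intro exI conjI)
    show "pp s \<in> Rs s" unfolding pp_def Rs_def by auto
    show "\<forall>j<card (FF s). v j \<in> Rs s"
      using hF FF_sub unfolding v_def Rs_def by fastforce
    show "indep v {..<card (FF s)}"
      unfolding indep_def
    proof (intro allI impI ballI)
      fix c j0 assume H: "\<forall>i. (\<Sum>j\<in>{..<card (FF s)}. c j * v j i) = 0" and j0: "j0 \<in> {..<card (FF s)}"
      have "(\<Sum>j\<in>{..<card (FF s)}. c j * v j (h j0)) = c j0"
        using sumv[of c "h j0"] hF[of j0] j0 h by (simp add: bij_betw_inv_into_left)
      then show "c j0 = 0" using H by simp
    qed
    show "\<forall>t::nat \<Rightarrow> real. (\<forall>j<card (FF s). 0 \<le> t j) \<and> (\<Sum>j<card (FF s). t j) \<le> 1 \<longrightarrow>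
        (\<lambda>i. pp s i + (\<Sum>j<card (FF s). t j * v j i)) \<in> D_set a n s"
    proof (intro allI impI)
      fix t :: "nat \<Rightarrow> real" assume t: "(\<forall>j<card (FF s). 0 \<le> t j) \<and> (\<Sum>j<card (FF s). t j) \<le> 1"
      show "(\<lambda>i. pp s i + (\<Sum>j<card (FF s). t j * v j i)) \<in> D_set a n s"
      proof (rule core)
        show "(\<lambda>i. pp s i + (\<Sum>j<card (FF s). t j * v j i)) \<in> Rs s"
          using FF_sub[of s] unfolding sumv unfolding Rs_def pp_def by auto
        show "pp s q + (\<Sum>j<card (FF s). t j * v j q) = pp s q" if "q \<notin> FF s" for q
          using that unfolding sumv by simp
        show "pp s q \<le> pp s q + (\<Sum>j<card (FF s). t j * v j q)" if "q \<in> FF s" for q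
        proof -
          have "inv_into {..<card (FF s)} h q \<in> {..<card (FF s)}"
            using that h by (metis bij_betw_def inv_into_into)
          then show ?thesis using that t unfolding sumv by simp
        qed
      qed
    qed
  qed
qed

lemma card_FF: "real s / 6 - real g / 3 \<le> real (card (FF s))"
proof -
  define GS where "GS = {\<rho>. \<rho> < g \<and> \<rho> \<notin> R \<and> (\<rho> + \<delta>) mod g \<in> R}"
  define Q where "Q = s div (2 * g)"
  define f where "f bp = 2 * g * fst bp + g + snd bp" for bp :: "nat \<times> nat"
  have gp: "g \<ge> 1" by (rule g_pos)
  have finGS: "finite GS" unfolding GS_def by simp
  have fmod: "f (b, \<rho>) mod g = \<rho>" and fdiv: "f (b, \<rho>) div g = 2 * b + 1" if "\<rho> < g" for b \<rho>
  proof -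
    have e: "f (b, \<rho>) = \<rho> + g * (2 * b + 1)" unfolding f_def by (simp add: algebra_simps)
    show "f (b, \<rho>) mod g = \<rho>" unfolding e by (simp only: mod_mult_self2) (use that in simp)
    have "g \<noteq> 0" using gp by simp
    then show "f (b, \<rho>) div g = 2 * b + 1" unfolding e using div_mult_self2[of g \<rho> "2*b+1"] that by simp
  qed
  have img: "f ` ({..<Q} \<times> GS) \<subseteq> FF s"
  proof
    fix q assume "q \<in> f ` ({..<Q} \<times> GS)"
    then obtain b \<rho> where b: "b < Q" "\<rho> \<in> GS" "q = f (b, \<rho>)" by auto
    have \<rho>g: "\<rho> < g" using b(2) unfolding GS_def by simp
    have "q < 2 * g * (b + 1)" using b(3) \<rho>g unfolding f_def by (simp add: algebra_simps)
    also have "\<dots> \<le> 2 * g * Q" using b(1) by (intro mult_le_mono2) simp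
    also have "\<dots> \<le> s" using div_times_less_eq_dividend[of s "2*g"] unfolding Q_def by (simp add: mult.commute)
    finally have "q \<le> s" by simp
    moreover have "1 \<le> q" using b(3) gp unfolding f_def by simp
    moreover have "Good (q mod g)" using b fmod[OF \<rho>g] \<rho>g unfolding GS_def Good_def by simp
    moreover have "odd (q div g)" using b(3) fdiv[OF \<rho>g] by simp
    ultimately show "q \<in> FF s" unfolding FF_def by simp
  qed
  have inj: "inj_on f ({..<Q} \<times> GS)"
  proof (rule inj_onI)
    fix x y assume x: "x \<in> {..<Q} \<times> GS" and y: "y \<in> {..<Q} \<times> GS" and e: "f x = f y"
    obtain b1 \<rho>1 where x': "x = (b1, \<rho>1)" "\<rho>1 < g" using x unfolding GS_def by auto
    obtain b2 \<rho>2 where y': "y = (b2, \<rho>2)" "\<rho>2 < g" using y unfolding GS_def by auto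
    have "\<rho>1 = \<rho>2" using fmod[OF x'(2), of b1] fmod[OF y'(2), of b2] e x' y' by simp
    moreover have "2 * b1 + 1 = 2 * b2 + 1" using fdiv[OF x'(2), of b1] fdiv[OF y'(2), of b2] e x' y' by simp
    ultimately show "x = y" using x' y' by simp
  qed
  have "card (f ` ({..<Q} \<times> GS)) = Q * card GS"
    using card_image[OF inj] by (simp add: card_cartesian_product)
  then have c1: "Q * card GS \<le> card (FF s)"
    using card_mono[OF finite_subset[OF FF_sub[of s] finite_atLeastAtMost] img] by simp
  have c2: "real g \<le> 3 * real (card GS)" using Rgood unfolding GS_def by linarith
  have c3: "real s < 2 * real g * (real Q + 1)"
  proof -
    have m1: "s mod (2*g) < 2*g" using gp by simp
    have m2: "s = 2*g*Q + s mod (2*g)" unfolding Q_def by simp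
    have "s < 2 * g * Q + 2 * g" using m1 m2 by linarith
    then have "s < 2 * g * (Q + 1)" by (simp add: algebra_simps)
    then have "real s < real (2 * g * (Q + 1))" by linarith
    then show ?thesis by (simp add: algebra_simps)
  qed
  have "real s / 6 - real g / 3 \<le> real g / 3 * real Q"
  proof -
    have "real s / 6 < real g / 3 * (real Q + 1)" using c3 by (simp add: field_simps)
    then show ?thesis by (simp add: algebra_simps)
  qed
  also have "\<dots> \<le> real (card GS) * real Q" using c2 by (intro mult_right_mono) auto
  also have "\<dots> \<le> real (card (FF s))" using c1 by (metis mult.commute of_nat_le_iff of_nat_mult)
  finally show ?thesis .
qed

lemma lb_dseq: "real s / 6 - real g / 3 \<le> real (d_seq a n s)"
proof -
  have "card (FF s) \<le> d_seq a n s" unfolding d_seq_def by (rule dim_ge[OF cs_FF])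
  then show ?thesis using card_FF[of s] by linarith
qed

end


definition goodline :: "(nat \<Rightarrow> ereal) \<Rightarrow> nat \<Rightarrow> bool" where
  "goodline a n \<longleftrightarrow> (\<exists>\<alpha> \<beta> u w r0. u < w \<and> w \<le> n \<and> r0 \<le> n \<and>
     a u = ereal (\<alpha> + \<beta> * real u) \<and> a w = ereal (\<alpha> + \<beta> * real w) \<and>
     (\<forall>i\<le>n. ereal (\<alpha> + \<beta> * real i) \<le> a i) \<and> a r0 < \<infinity> \<and> r0 mod (w - u) \<noteq> u mod (w - u))"

lemma goodline_lb:
  assumes gl: "goodline a n"
  shows "\<exists>C. \<forall>s. real s / 6 - C \<le> real (d_seq a n s)"
proof -
  obtain \<alpha> \<beta> u w r0 where uw: "u < w" "w \<le> n" "r0 \<le> n"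
    and au: "a u = ereal (\<alpha> + \<beta> * real u)" and aw: "a w = ereal (\<alpha> + \<beta> * real w)"
    and sup: "\<forall>i\<le>n. ereal (\<alpha> + \<beta> * real i) \<le> a i" and ar0: "a r0 < \<infinity>"
    and r0m: "r0 mod (w - u) \<noteq> u mod (w - u)"
    using gl unfolding goodline_def by blast
  define g where "g = w - u"
  have gp: "g \<ge> 1" using uw unfolding g_def by simp
  define Cands where "Cands = {i. i \<le> n \<and> a i < \<infinity> \<and> i mod g \<noteq> u mod g}"
  define \<phi> where "\<phi> i = real_of_ereal (a i) - (\<alpha> + \<beta> * real i)" for i
  have finC: "finite Cands" unfolding Cands_def by simp
  have r0C: "r0 \<in> Cands" unfolding Cands_def g_def using uw ar0 r0m by simp
  then have neC: "\<phi> ` Cands \<noteq> {}" by blast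
  define c where "c = Min (\<phi> ` Cands)"
  obtain rs where rs: "rs \<in> Cands" "\<phi> rs = c"
    using Min_in[OF finite_imageI[OF finC] neC] unfolding c_def by auto
  have afin: "a i = ereal (\<alpha> + \<beta> * real i + \<phi> i)" if "i \<le> n" "a i < \<infinity>" for i
  proof -
    have "ereal (\<alpha> + \<beta> * real i) \<le> a i" using sup that by blast
    then show ?thesis using that(2) unfolding \<phi>_def by (cases "a i") auto
  qed
  have \<phi>nn: "0 \<le> \<phi> i" if "i \<le> n" "a i < \<infinity>" for i
  proof -
    have "ereal (\<alpha> + \<beta> * real i) \<le> a i" using sup that by blast
    then show ?thesis using afin[OF that] by simp
  qed
  have c0: "0 \<le> c" using rs \<phi>nn unfolding Cands_def by auto
  have cle: "c \<le> \<phi> i" if "i \<in> Cands" for i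
    unfolding c_def using that finC by simp
  have ars: "a rs = ereal (\<alpha> + \<beta> * real rs + c)" using afin rs unfolding Cands_def by auto
  have cmin: "ereal (\<alpha> + \<beta> * real i + c) \<le> a i"
    if "i \<le> n" "a i < \<infinity>" "i mod g \<noteq> u mod g" for i
  proof -
    have "i \<in> Cands" using that unfolding Cands_def by simp
    then have "c \<le> \<phi> i" by (rule cle)
    then show ?thesis using afin[OF that(1,2)] by simp
  qed
  define \<delta> where "\<delta> = nat ((int rs - int u) mod int g)"
  have \<delta>int: "int \<delta> = (int rs - int u) mod int g" unfolding \<delta>_def using gp by simp
  have "(int rs - int u) mod int g < int g" by (rule pos_mod_bound) (use gp in simp)
  then have \<delta>g: "\<delta> < g" using \<delta>int by simp
  have \<delta>mod: "(u + \<delta>) mod g = rs mod g"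
  proof -
    have "int ((u + \<delta>) mod g) = (int u + int \<delta>) mod int g" by (simp add: zmod_int)
    also have "\<dots> = (int u + (int rs - int u)) mod int g" unfolding \<delta>int by (simp add: mod_add_right_eq)
    also have "\<dots> = int (rs mod g)" by (simp add: zmod_int)
    finally show ?thesis by simp
  qed
  have rsu: "rs mod g \<noteq> u mod g" using rs unfolding Cands_def by simp
  have \<delta>1: "1 \<le> \<delta>"
  proof (rule ccontr)
    assume "\<not> 1 \<le> \<delta>"
    then have "\<delta> = 0" by simp
    then show False using \<delta>mod rsu by simp
  qed
  obtain R where R: "R \<subseteq> {..<g}" "g \<le> 3 * card {\<rho>. \<rho> < g \<and> \<rho> \<notin> R \<and> (\<rho> + \<delta>) mod g \<in> R}"
    using goodR[OF \<delta>1 \<delta>g] by blast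
  have rsn: "rs \<le> n" using rs unfolding Cands_def by simp
  interpret L: lbctx a n u w rs g \<delta> \<alpha> \<beta> c R
    by unfold_locales (use uw rsn g_def au aw sup ars cmin c0 rsu \<delta>mod R in auto)
  show ?thesis using L.lb_dseq by blast
qed

lemma strict_support_extreme:
  assumes i0: "i0 \<in> supp_idx a n"
    and fin: "\<And>i. i \<in> supp_idx a n \<Longrightarrow> a i = ereal (b i)"
    and ss: "\<And>i. i \<in> supp_idx a n \<Longrightarrow> i \<noteq> i0 \<Longrightarrow> b i0 + lam * (real i - real i0) < b i"
  shows "(real i0, b i0) extreme_point_of newton_polygon a n"
proof -
  define J where "J = supp_idx a n"
  have finJ: "finite J" unfolding J_def supp_idx_def by simp
  define \<mu> where "\<mu> i = (b i - b i0 - lam * (real i - real i0)) / \<bar>real i - real i0\<bar>" for i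
  obtain \<kappa> where \<kappa>: "\<kappa> > 0" "\<And>i. i \<in> J \<Longrightarrow> i \<noteq> i0 \<Longrightarrow> \<kappa> \<le> \<mu> i"
  proof (cases "J - {i0} = {}")
    case True then show ?thesis using that[of 1] by auto
  next
    case False
    define \<kappa> where "\<kappa> = Min (\<mu> ` (J - {i0}))"
    have "\<kappa> \<in> \<mu> ` (J - {i0})" unfolding \<kappa>_def using False finJ by (intro Min_in) auto
    then obtain j where j: "j \<in> J" "j \<noteq> i0" "\<kappa> = \<mu> j" by auto
    have "\<mu> j > 0" unfolding \<mu>_def using ss[of j] j unfolding J_def by (simp add: divide_pos_pos)
    moreover have "\<kappa> \<le> \<mu> i" if "i \<in> J" "i \<noteq> i0" for i
      unfolding \<kappa>_def using that finJ by (intro Min_le) auto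
    ultimately show ?thesis using that[of \<kappa>] j by auto
  qed
  define \<psi> where "\<psi> p = snd p - b i0 - lam * (fst p - real i0)" for p :: "real \<times> real"
  define K where "K = {p. \<kappa> * \<bar>fst p - real i0\<bar> \<le> \<psi> p}"
  have convK: "convex K"
    unfolding convex_def K_def
  proof (intro ballI allI impI, clarsimp)
    fix x1 y1 x2 y2 u v :: real
    assume h1: "\<kappa> * \<bar>x1 - real i0\<bar> \<le> \<psi> (x1, y1)" and h2: "\<kappa> * \<bar>x2 - real i0\<bar> \<le> \<psi> (x2, y2)"
      and uv: "0 \<le> u" "0 \<le> v" "u + v = 1"
    have v: "v = 1 - u" using uv(3) by simp
    have "\<bar>u * x1 + v * x2 - real i0\<bar> = \<bar>u * (x1 - real i0) + v * (x2 - real i0)\<bar>"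
      unfolding v by (simp add: algebra_simps)
    also have "\<dots> \<le> \<bar>u * (x1 - real i0)\<bar> + \<bar>v * (x2 - real i0)\<bar>" by (rule abs_triangle_ineq)
    also have "\<dots> = u * \<bar>x1 - real i0\<bar> + v * \<bar>x2 - real i0\<bar>"
      using uv(1,2) by (simp add: abs_mult)
    finally have a1: "\<kappa> * \<bar>u * x1 + v * x2 - real i0\<bar> \<le> u * (\<kappa> * \<bar>x1 - real i0\<bar>) + v * (\<kappa> * \<bar>x2 - real i0\<bar>)"
      using \<kappa>(1) mult_left_mono[of "\<bar>u * x1 + v * x2 - real i0\<bar>" "u * \<bar>x1 - real i0\<bar> + v * \<bar>x2 - real i0\<bar>" \<kappa>]
      by (simp add: algebra_simps)
    have a2: "u * (\<kappa> * \<bar>x1 - real i0\<bar>) + v * (\<kappa> * \<bar>x2 - real i0\<bar>) \<le> u * \<psi> (x1, y1) + v * \<psi> (x2, y2)"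
      using h1 h2 uv by (intro add_mono mult_left_mono) auto
    have a3: "u * \<psi> (x1, y1) + v * \<psi> (x2, y2) = \<psi> (u * x1 + v * x2, u * y1 + v * y2)"
      unfolding \<psi>_def v by (simp add: algebra_simps)
    show "\<kappa> * \<bar>u * x1 + v * x2 - real i0\<bar> \<le> \<psi> (u * x1 + v * x2, u * y1 + v * y2)"
      using a1 a2 a3 by linarith
  qed
  have genK: "(\<Union>i\<in>supp_idx a n. {(real i, y) | y. a i \<le> ereal y}) \<subseteq> K"
  proof
    fix p assume "p \<in> (\<Union>i\<in>supp_idx a n. {(real i, y) | y. a i \<le> ereal y})"
    then obtain i y where iy: "i \<in> J" "p = (real i, y)" "a i \<le> ereal y" unfolding J_def by auto
    have yb: "b i \<le> y" using iy fin[of i] unfolding J_def by simp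
    show "p \<in> K"
    proof (cases "i = i0")
      case True then show ?thesis using iy yb unfolding K_def \<psi>_def by simp
    next
      case False
      have "\<kappa> \<le> \<mu> i" using \<kappa>(2) iy False by blast
      moreover have pos: "\<bar>real i - real i0\<bar> > 0" using False by simp
      ultimately have "\<kappa> * \<bar>real i - real i0\<bar> \<le> b i - b i0 - lam * (real i - real i0)"
        unfolding \<mu>_def by (simp add: field_simps)
      then show ?thesis using iy yb unfolding K_def \<psi>_def by simp
    qed
  qed
  have PK: "newton_polygon a n \<subseteq> K"
    unfolding newton_polygon_def by (rule hull_minimal[where S=convex, OF genK convK])
  have X: "(real i0, b i0) \<in> newton_polygon a n"
  proof -
    have "(real i0, b i0) \<in> {(real i0, y) | y. a i0 \<le> ereal y}" using fin[OF i0] by simp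
    then have "(real i0, b i0) \<in> (\<Union>i\<in>supp_idx a n. {(real i, y) | y. a i \<le> ereal y})"
      using i0 by (rule UN_I[rotated])
    then show ?thesis unfolding newton_polygon_def by (rule hull_inc)
  qed
  have eqX: "p = (real i0, b i0)" if "p \<in> K" "\<psi> p \<le> 0" for p
  proof -
    have "\<kappa> * \<bar>fst p - real i0\<bar> \<le> 0" using that unfolding K_def by simp
    then have "fst p = real i0" using \<kappa>(1) by (simp add: mult_le_0_iff)
    moreover have "0 \<le> \<psi> p"
      using that(1) \<kappa>(1) unfolding K_def by (metis (mono_tags, lifting) mem_Collect_eq abs_ge_zero mult_nonneg_nonneg less_imp_le order_trans)
    ultimately have "\<psi> p = 0" "fst p = real i0" using that(2) by auto
    then have "snd p = b i0" unfolding \<psi>_def by simp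
    note this \<open>fst p = real i0\<close>
    then show ?thesis by (simp add: prod_eq_iff)
  qed
  show ?thesis
    unfolding extreme_point_of_def
  proof (intro conjI ballI X notI)
    fix A B assume A: "A \<in> newton_polygon a n" and B: "B \<in> newton_polygon a n"
      and XAB: "(real i0, b i0) \<in> open_segment A B"
    have AK: "A \<in> K" and BK: "B \<in> K" using A B PK by auto
    have "0 \<le> \<kappa> * \<bar>fst A - real i0\<bar>" "0 \<le> \<kappa> * \<bar>fst B - real i0\<bar>" using \<kappa>(1) by simp_all
    then have psiA: "0 \<le> \<psi> A" and psiB: "0 \<le> \<psi> B"
      using AK BK unfolding K_def by auto
    obtain u where u: "0 \<le> u" "u \<le> 1" "(real i0, b i0) = (1 - u) *\<^sub>R A + u *\<^sub>R B"
      and ne: "(real i0, b i0) \<noteq> A" "(real i0, b i0) \<noteq> B"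
      using XAB unfolding open_segment_def closed_segment_def by auto
    have lin: "\<psi> ((1 - u) *\<^sub>R A + u *\<^sub>R B) = (1 - u) * \<psi> A + u * \<psi> B"
      unfolding \<psi>_def by (simp add: algebra_simps)
    have "\<psi> (real i0, b i0) = 0" unfolding \<psi>_def by simp
    then have sum0: "(1 - u) * \<psi> A + u * \<psi> B = 0" using lin u(3) by simp
    show False
    proof (cases "u = 1")
      case True then show False using u(3) ne(2) by simp
    next
      case False
      then have "1 - u > 0" using u by simp
      moreover have "u * \<psi> B \<ge> 0" using u psiB by simp
      ultimately have "(1 - u) * \<psi> A \<le> 0" using sum0 by linarith
      then have "\<psi> A \<le> 0" using \<open>1 - u > 0\<close> by (simp add: mult_le_0_iff)
      then show False using eqX[OF AK] ne(1) by simp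
    qed
  qed
qed


locale ngctx =
  fixes a :: "nat \<Rightarrow> ereal" and n :: nat
  assumes n1: "n \<ge> 1" and ninf: "\<forall>i\<le>n. a i \<noteq> -\<infinity>" and a0: "a 0 < \<infinity>" and an: "a n < \<infinity>"
    and NG: "\<not> goodline a n"
begin

abbreviation "J \<equiv> supp_idx a n"
definition b :: "nat \<Rightarrow> real" where "b i = real_of_ereal (a i)"
definition fullsupp :: "nat \<Rightarrow> real \<Rightarrow> bool" where
  "fullsupp u lam \<longleftrightarrow> (\<forall>i\<in>J. b u + lam * (real i - real u) \<le> b i)"

lemma finJ: "finite J" unfolding supp_idx_def by simp
lemma Jle: "i \<in> J \<Longrightarrow> i \<le> n" unfolding supp_idx_def by simp
lemma aJ: "i \<in> J \<Longrightarrow> a i = ereal (b i)"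
proof -
  assume i: "i \<in> J"
  then have "a i < \<infinity>" "a i \<noteq> -\<infinity>" using ninf unfolding supp_idx_def by auto
  then show ?thesis unfolding b_def by (cases "a i") auto
qed
lemma anJ: "i \<le> n \<Longrightarrow> i \<notin> J \<Longrightarrow> a i = \<infinity>"
  unfolding supp_idx_def by (simp add: not_less top_unique)
lemma zeroJ: "0 \<in> J" using a0 unfolding supp_idx_def by simp
lemma nJ: "n \<in> J" using an unfolding supp_idx_def by simp

lemma NG':
  assumes u: "u \<in> J" and w: "w \<in> J" and uw: "u < w" and fs: "fullsupp u lam"
    and bw: "b w = b u + lam * (real w - real u)" and r: "r \<in> J"
  shows "r mod (w - u) = u mod (w - u)"
proof (rule ccontr)
  assume contra: "r mod (w - u) \<noteq> u mod (w - u)"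
  define \<alpha> where "\<alpha> = b u - lam * real u"
  have "goodline a n"
    unfolding goodline_def
  proof (intro exI conjI)
    show "u < w" by (rule uw)
    show "w \<le> n" using Jle[OF w] .
    show "r \<le> n" using Jle[OF r] .
    show "a u = ereal (\<alpha> + lam * real u)" using aJ[OF u] unfolding \<alpha>_def by simp
    show "a w = ereal (\<alpha> + lam * real w)" using aJ[OF w] bw unfolding \<alpha>_def by (simp add: algebra_simps)
    show "\<forall>i\<le>n. ereal (\<alpha> + lam * real i) \<le> a i"
    proof (intro allI impI)
      fix i assume i: "i \<le> n"
      show "ereal (\<alpha> + lam * real i) \<le> a i"
      proof (cases "i \<in> J")
        case True
        then have "b u + lam * (real i - real u) \<le> b i" using fs unfolding fullsupp_def by blast
        then show ?thesis using aJ[OF True] unfolding \<alpha>_def by (simp add: algebra_simps)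
      next
        case False then show ?thesis using anJ[OF i] by simp
      qed
    qed
    show "a r < \<infinity>" using aJ[OF r] by simp
    show "r mod (w - u) \<noteq> u mod (w - u)" by (rule contra)
  qed
  then show False using NG by simp
qed

lemma step0:
  assumes u: "u \<in> J" and un: "u < n"
  shows "\<exists>\<sigma> w. w \<in> J \<and> u < w \<and> b w = b u + \<sigma> * (real w - real u) \<and>
           (\<forall>i\<in>J. u < i \<longrightarrow> b u + \<sigma> * (real i - real u) \<le> b i)"
proof -
  define W where "W = {i \<in> J. u < i}"
  define sl where "sl i = (b i - b u) / (real i - real u)" for i
  have finW: "finite W" unfolding W_def using finJ by simp
  have "n \<in> W" unfolding W_def using nJ un by simp
  then have neW: "sl ` W \<noteq> {}" by blast
  define \<sigma> where "\<sigma> = Min (sl ` W)"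
  obtain w where w: "w \<in> W" "sl w = \<sigma>" using Min_in[OF finite_imageI[OF finW] neW] unfolding \<sigma>_def by auto
  have le: "\<sigma> \<le> sl i" if "i \<in> W" for i unfolding \<sigma>_def using finW that by simp
  have "b w = b u + \<sigma> * (real w - real u)"
  proof -
    have "real w - real u > 0" using w unfolding W_def by simp
    then show ?thesis using w(2) unfolding sl_def by (simp add: field_simps)
  qed
  moreover have "\<forall>i\<in>J. u < i \<longrightarrow> b u + \<sigma> * (real i - real u) \<le> b i"
  proof (intro ballI impI)
    fix i assume i: "i \<in> J" "u < i"
    then have "\<sigma> \<le> sl i" using le unfolding W_def by simp
    moreover have "real i - real u > 0" using i by simp
    ultimately show "b u + \<sigma> * (real i - real u) \<le> b i" unfolding sl_def by (simp add: field_simps)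
  qed
  ultimately show ?thesis using w unfolding W_def by blast
qed

definition g :: nat where
  "g = (SOME w. w \<in> J \<and> 0 < w \<and> (\<exists>\<sigma>. b w = b 0 + \<sigma> * real w \<and> (\<forall>i\<in>J. 0 < i \<longrightarrow> b 0 + \<sigma> * real i \<le> b i)))"

lemma g_props: "g \<in> J" "g \<ge> 1" "\<And>r. r \<in> J \<Longrightarrow> g dvd r"
proof -
  have "\<exists>w. w \<in> J \<and> 0 < w \<and> (\<exists>\<sigma>. b w = b 0 + \<sigma> * real w \<and> (\<forall>i\<in>J. 0 < i \<longrightarrow> b 0 + \<sigma> * real i \<le> b i))"
    using step0[OF zeroJ] n1 by auto
  then have H: "g \<in> J \<and> 0 < g \<and> (\<exists>\<sigma>. b g = b 0 + \<sigma> * real g \<and> (\<forall>i\<in>J. 0 < i \<longrightarrow> b 0 + \<sigma> * real i \<le> b i))"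
    unfolding g_def by (rule someI_ex)
  then show "g \<in> J" "g \<ge> 1" by auto
  obtain \<sigma> where \<sigma>: "b g = b 0 + \<sigma> * real g" "\<forall>i\<in>J. 0 < i \<longrightarrow> b 0 + \<sigma> * real i \<le> b i" using H by blast
  have fs: "fullsupp 0 \<sigma>" unfolding fullsupp_def using \<sigma>(2) by (metis of_nat_0 diff_zero gr0I mult_zero_right add_0_right order_refl)
  fix r assume r: "r \<in> J"
  have "r mod (g - 0) = 0 mod (g - 0)" by (rule NG'[OF zeroJ \<open>g \<in> J\<close> _ fs _ r]) (use H \<sigma> in auto)
  then show "g dvd r" by (simp add: dvd_eq_mod_eq_0)
qed

lemma next_step:
  assumes u: "u \<in> J" "u < n" "g dvd u" and fs: "fullsupp u lam"
  shows "\<exists>\<sigma>. u + g \<in> J \<and> fullsupp u \<sigma> \<and> b (u + g) = b u + \<sigma> * real g \<and>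
           (\<forall>i\<in>J. u < i \<longrightarrow> i \<noteq> u + g \<longrightarrow> b u + \<sigma> * (real i - real u) < b i)"
proof -
  obtain \<sigma> w where w: "w \<in> J" "u < w" "b w = b u + \<sigma> * (real w - real u)"
    and rs: "\<forall>i\<in>J. u < i \<longrightarrow> b u + \<sigma> * (real i - real u) \<le> b i"
    using step0[OF u(1,2)] by blast
  have "b u + lam * (real w - real u) \<le> b w" using fs w(1) unfolding fullsupp_def by blast
  then have "lam * (real w - real u) \<le> \<sigma> * (real w - real u)" using w(3) by simp
  moreover have "real w - real u > 0" using w(2) by simp
  ultimately have lam\<sigma>: "lam \<le> \<sigma>" by simp
  have fs\<sigma>: "fullsupp u \<sigma>"
    unfolding fullsupp_def
  proof
    fix i assume i: "i \<in> J"
    show "b u + \<sigma> * (real i - real u) \<le> b i"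
    proof (cases "u < i")
      case True then show ?thesis using rs i by blast
    next
      case False
      then have "real i - real u \<le> 0" by simp
      then have "\<sigma> * (real i - real u) \<le> lam * (real i - real u)" using lam\<sigma> by (simp add: mult_right_mono_neg)
      moreover have "b u + lam * (real i - real u) \<le> b i" using fs i unfolding fullsupp_def by blast
      ultimately show ?thesis by simp
    qed
  qed
  have key: "w' = u + g" if w': "w' \<in> J" "u < w'" "b w' = b u + \<sigma> * (real w' - real u)" for w'
  proof -
    define e where "e = w' - u"
    have e0: "e > 0" using w' unfolding e_def by simp
    have m0: "0 mod e = u mod e" using NG'[OF u(1) w'(1) w'(2) fs\<sigma> w'(3) zeroJ] unfolding e_def by simp
    have mg: "g mod e = u mod e" using NG'[OF u(1) w'(1) w'(2) fs\<sigma> w'(3) g_props(1)] unfolding e_def by simp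
    have "e dvd g" using m0 mg by (simp add: dvd_eq_mod_eq_0)
    then have eg: "e \<le> g" using g_props(2) by (simp add: dvd_imp_le)
    have "g dvd w'" using g_props(3)[OF w'(1)] .
    then have "g dvd e" unfolding e_def using u(3) by (simp add: dvd_diff_nat)
    then have "g \<le> e" using e0 by (simp add: dvd_imp_le)
    then show ?thesis using eg w' unfolding e_def by simp
  qed
  have wg: "w = u + g" by (rule key[OF w])
  have strict: "\<forall>i\<in>J. u < i \<longrightarrow> i \<noteq> u + g \<longrightarrow> b u + \<sigma> * (real i - real u) < b i"
  proof (intro ballI impI)
    fix i assume i: "i \<in> J" "u < i" "i \<noteq> u + g"
    have "b u + \<sigma> * (real i - real u) \<le> b i" using rs i by blast
    moreover have "b u + \<sigma> * (real i - real u) \<noteq> b i" using key[of i] i by force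
    ultimately show "b u + \<sigma> * (real i - real u) < b i" by simp
  qed
  have "b (u + g) = b u + \<sigma> * real g" using w(3) wg by simp
  then show ?thesis using fs\<sigma> strict w(1) wg by blast
qed

lemma claim: "k * g \<le> n \<Longrightarrow> k * g \<in> J \<and> (\<exists>lam. fullsupp (k * g) lam)"
proof (induction k)
  case 0
  have "fullsupp 0 (- M)" if "\<forall>i\<in>J. b 0 - M * real i \<le> b i" for M
    using that unfolding fullsupp_def by simp
  obtain \<sigma> w where "w \<in> J" "0 < w" "b w = b 0 + \<sigma> * (real w - real 0)"
    and rs: "\<forall>i\<in>J. 0 < i \<longrightarrow> b 0 + \<sigma> * (real i - real 0) \<le> b i"
    using step0[OF zeroJ] n1 by auto
  have "fullsupp 0 \<sigma>" unfolding fullsupp_def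
  proof
    fix i assume i: "i \<in> J"
    show "b 0 + \<sigma> * (real i - real 0) \<le> b i" using rs i by (cases "i = 0") auto
  qed
  then show ?case using zeroJ by auto
next
  case (Suc k)
  have kn: "k * g < n" using Suc.prems g_props(2) by simp
  obtain lam where u: "k * g \<in> J" "fullsupp (k * g) lam" using Suc.IH kn by auto
  obtain \<sigma> where \<sigma>: "k * g + g \<in> J" "fullsupp (k * g) \<sigma>" "b (k * g + g) = b (k * g) + \<sigma> * real g"
    using next_step[OF u(1) kn _ u(2)] by auto
  have "fullsupp (k * g + g) \<sigma>"
    unfolding fullsupp_def
  proof
    fix i assume i: "i \<in> J"
    have "b (k * g) + \<sigma> * (real i - real (k * g)) \<le> b i" using \<sigma>(2) i unfolding fullsupp_def by blast
    then show "b (k * g + g) + \<sigma> * (real i - real (k * g + g)) \<le> b i" using \<sigma>(3) by (simp add: algebra_simps)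
  qed
  then show ?case using \<sigma>(1) by (auto simp: add.commute)
qed


definition K :: nat where "K = n div g"

lemma nK: "n = K * g" unfolding K_def using g_props(3)[OF nJ] by simp

lemma K1: "K \<ge> 1" using nK n1 by (cases K) auto

lemma J_eq: "J = {g * k | k. k \<le> K}"
proof
  show "J \<subseteq> {g * k | k. k \<le> K}"
  proof
    fix i assume i: "i \<in> J"
    then obtain k where k: "i = g * k" using g_props(3) by (auto elim: dvdE)
    have "g * k \<le> g * K" using Jle[OF i] k nK by (simp add: mult.commute)
    then have "k \<le> K" using g_props(2) by simp
    then show "i \<in> {g * k | k. k \<le> K}" using k by blast
  qed
  show "{g * k | k. k \<le> K} \<subseteq> J"
  proof
    fix i assume "i \<in> {g * k | k. k \<le> K}"
    then obtain k where k: "i = g * k" "k \<le> K" by blast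
    have "k * g \<le> n" using mult_le_mono1[OF k(2), of g] nK by simp
    then have "k * g \<in> J" using claim by blast
    then show "i \<in> J" using k by (simp add: mult.commute)
  qed
qed

definition \<sigma>k :: "nat \<Rightarrow> real" where "\<sigma>k k = (b ((k + 1) * g) - b (k * g)) / real g"

lemma edge:
  assumes "(k + 1) * g \<le> n"
  shows "fullsupp (k * g) (\<sigma>k k)"
    "\<forall>i\<in>J. k * g < i \<longrightarrow> i \<noteq> (k + 1) * g \<longrightarrow> b (k * g) + \<sigma>k k * (real i - real (k * g)) < b i"
proof -
  have kn: "k * g < n" using assms g_props(2) by simp
  obtain lam where u: "k * g \<in> J" "fullsupp (k * g) lam" using claim[of k] kn by auto
  obtain \<sigma> where \<sigma>: "k * g + g \<in> J" "fullsupp (k * g) \<sigma>" "b (k * g + g) = b (k * g) + \<sigma> * real g"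
    "\<forall>i\<in>J. k * g < i \<longrightarrow> i \<noteq> k * g + g \<longrightarrow> b (k * g) + \<sigma> * (real i - real (k * g)) < b i"
    using next_step[OF u(1) kn _ u(2)] by auto
  have "\<sigma> = \<sigma>k k" unfolding \<sigma>k_def using \<sigma>(3) g_props(2) by (simp add: add.commute field_simps)
  then show "fullsupp (k * g) (\<sigma>k k)"
    "\<forall>i\<in>J. k * g < i \<longrightarrow> i \<noteq> (k + 1) * g \<longrightarrow> b (k * g) + \<sigma>k k * (real i - real (k * g)) < b i"
    using \<sigma> by (auto simp: add.commute)
qed

lemma bstep: "b ((k + 1) * g) = b (k * g) + \<sigma>k k * real g"
  unfolding \<sigma>k_def using g_props(2) by simp

lemma inc:
  assumes k: "1 \<le> k" "(k + 1) * g \<le> n"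
  shows "\<sigma>k (k - 1) < \<sigma>k k"
proof -
  obtain k' where k': "k = k' + 1" using k(1) by (cases k) auto
  have "(k' + 1) * g \<le> n" using k k' by simp
  have "(k' + 2) * g \<in> J" using claim[of "k' + 2"] k k' by (simp add: algebra_simps)
  moreover have "k' * g < (k' + 2) * g" "(k' + 2) * g \<noteq> (k' + 1) * g" using g_props(2) by simp_all
  ultimately have "b (k' * g) + \<sigma>k k' * (real ((k' + 2) * g) - real (k' * g)) < b ((k' + 2) * g)"
    using edge(2)[OF \<open>(k' + 1) * g \<le> n\<close>] by blast
  moreover have "b ((k' + 2) * g) = b ((k' + 1) * g) + \<sigma>k (k' + 1) * real g"
    using bstep[of "k' + 1"] by (simp add: add.assoc)
  moreover have "b ((k' + 1) * g) = b (k' * g) + \<sigma>k k' * real g" by (rule bstep)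
  moreover have "real ((k' + 2) * g) - real (k' * g) = 2 * real g" by (simp add: algebra_simps)
  ultimately have "\<sigma>k k' * real g < \<sigma>k (k' + 1) * real g" by (simp add: algebra_simps)
  then show ?thesis using k' g_props(2) by simp
qed

lemma extreme:
  assumes k: "k \<le> K"
  shows "(real (g * k), b (g * k)) extreme_point_of newton_polygon a n"
proof -
  define lam where "lam = (if 0 < k \<and> k < K then (\<sigma>k (k - 1) + \<sigma>k k) / 2
                           else if k = 0 then \<sigma>k 0 - 1 else \<sigma>k (K - 1) + 1)"
  have right: "lam < \<sigma>k k" if "k < K"
  proof (cases "k = 0")
    case True then show ?thesis unfolding lam_def using that by simp
  next
    case False
    have "(k + 1) * g \<le> n" using that nK by (metis Suc_eq_plus1 Suc_leI mult_le_mono1)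
    then have "\<sigma>k (k - 1) < \<sigma>k k" using inc False by simp
    then show ?thesis unfolding lam_def using that False by simp
  qed
  have left: "\<sigma>k (k - 1) < lam" if "0 < k"
  proof (cases "k < K")
    case True
    have "(k + 1) * g \<le> n" using True nK by (metis Suc_eq_plus1 Suc_leI mult_le_mono1)
    then have "\<sigma>k (k - 1) < \<sigma>k k" using inc that by simp
    then show ?thesis unfolding lam_def using that True by simp
  next
    case False
    then have "k = K" using k by simp
    then show ?thesis unfolding lam_def using that by simp
  qed
  show ?thesis
  proof (rule strict_support_extreme[where b = b and lam = lam])
    show "g * k \<in> J" using J_eq k by blast
    show "\<And>i. i \<in> J \<Longrightarrow> a i = ereal (b i)" by (rule aJ)
    fix i assume i: "i \<in> J" "i \<noteq> g * k"
    show "b (g * k) + lam * (real i - real (g * k)) < b i"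
    proof (cases "g * k < i")
      case True
      have kK: "k < K"
      proof (rule ccontr)
        assume "\<not> k < K"
        then have "K \<le> k" by simp
        then have "K * g \<le> k * g" by (rule mult_le_mono1)
        then have "n \<le> g * k" using nK by (simp add: mult.commute)
        then show False using True Jle[OF i(1)] by simp
      qed
      have "(k + 1) * g \<le> n" using kK nK by (metis Suc_eq_plus1 Suc_leI mult_le_mono1)
      then have "b (k * g) + \<sigma>k k * (real i - real (k * g)) \<le> b i"
        using edge(1) i(1) unfolding fullsupp_def by blast
      moreover have "lam * (real i - real (g * k)) < \<sigma>k k * (real i - real (g * k))"
      proof -
        have "real (g * k) < real i" using True by (simp only: of_nat_less_iff)
        then show ?thesis using right[OF kK] by (intro mult_strict_right_mono) auto
      qed
      ultimately show ?thesis by (simp add: mult.commute)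
    next
      case False
      then have lt: "i < g * k" using i(2) by simp
      then have k0: "0 < k" by (cases k) auto
      obtain k' where k': "k = k' + 1" using k0 by (cases k) auto
      have "(k' + 1) * g \<le> n" using mult_le_mono1[OF k, of g] k' nK by simp
      then have F1: "b (k' * g) + \<sigma>k k' * (real i - real (k' * g)) \<le> b i"
        using edge(1) i(1) unfolding fullsupp_def by blast
      have F2: "b (g * k) = b (k' * g) + \<sigma>k k' * real g" using bstep[of k'] k' by (simp add: mult.commute)
      have F3: "lam * (real i - real (g * k)) < \<sigma>k k' * (real i - real (g * k))"
      proof -
        have "real i < real (g * k)" using lt by (simp only: of_nat_less_iff)
        then show ?thesis using left[OF k0] k' by (intro mult_strict_right_mono_neg) auto
      qed
      have F4: "real (g * k) = real (k' * g) + real g" using k' by (simp add: algebra_simps)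
      have "b (g * k) + lam * (real i - real (g * k)) < b (g * k) + \<sigma>k k' * (real i - real (g * k))"
        using F3 by simp
      also have "\<dots> = b (k' * g) + \<sigma>k k' * (real i - real (k' * g))" using F2 F4 by (simp add: algebra_simps)
      also have "\<dots> \<le> b i" by (rule F1)
      finally show ?thesis .
    qed
  qed
qed

lemma is_regular: "regular a n"
  unfolding regular_def
proof
  show "arith_prog J" unfolding arith_prog_def using J_eq by (intro exI[of _ 0] exI[of _ g] exI[of _ K]) simp
  show "\<forall>i\<in>J. (real i, real_of_ereal (a i)) extreme_point_of newton_polygon a n"
  proof
    fix i assume "i \<in> J"
    then obtain k where k: "i = g * k" "k \<le> K" using J_eq by blast
    show "(real i, real_of_ereal (a i)) extreme_point_of newton_polygon a n"
      using extreme[OF k(2)] k(1) unfolding b_def by simp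
  qed
qed

end


lemma nonregular_lb:
  assumes n1: "n \<ge> 1" and ninf: "\<forall>i\<le>n. a i \<noteq> -\<infinity>" and a0: "a 0 < \<infinity>" and an: "a n < \<infinity>"
    and nr: "\<not> regular a n"
  shows "tropical_entropy a n \<ge> 1/6"
proof -
  have gl: "goodline a n"
  proof (rule ccontr)
    assume "\<not> goodline a n"
    then interpret ngctx a n using n1 ninf a0 an by unfold_locales auto
    show False using is_regular nr by simp
  qed
  obtain C where C: "\<And>s. real s / 6 - C \<le> real (d_seq a n s)" using goodline_lb[OF gl] by blast
  have conv: "(\<lambda>s. real (d_seq a n s) / real s) \<longlonglongrightarrow> tropical_entropy a n"
    unfolding tropical_entropy_def using dseq_convergent convergent_LIMSEQ_iff by blast
  have lowlim: "(\<lambda>s. 1/6 - C / real s) \<longlonglongrightarrow> 1/6"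
  proof -
    have "(\<lambda>s. C / real s) \<longlonglongrightarrow> 0"
      by (rule tendsto_divide_0[OF tendsto_const]) (rule filterlim_at_top_imp_at_infinity[OF filterlim_real_sequentially])
    then show ?thesis using tendsto_diff[OF tendsto_const[of "1/6"]] by fastforce
  qed
  have "\<forall>s\<ge>1. 1/6 - C / real s \<le> real (d_seq a n s) / real s"
  proof (intro allI impI)
    fix s :: nat assume s: "s \<ge> 1"
    then have sp: "real s > 0" by simp
    have "1/6 - C / real s = (real s / 6 - C) / real s" using sp by (simp add: field_simps)
    also have "\<dots> \<le> real (d_seq a n s) / real s" using C[of s] sp by (simp add: divide_right_mono)
    finally show "1/6 - C / real s \<le> real (d_seq a n s) / real s" .
  qed
  then show ?thesis using LIMSEQ_le[OF lowlim conv] by blast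
qed

theorem corollary1:
  fixes a :: "nat \<Rightarrow> ereal" and n :: nat
  assumes "n \<ge> 1"
    and "\<forall>i\<le>n. a i \<noteq> -\<infinity>"
    and "a 0 < \<infinity>" and "a n < \<infinity>"
  shows "(regular a n \<longleftrightarrow> tropical_entropy a n = 0) \<and>
         (\<not> regular a n \<longrightarrow> tropical_entropy a n \<ge> 1/6)"
proof (cases "regular a n")
  case True
  then show ?thesis using regular_H0[OF True assms] by simp
next
  case False
  have "tropical_entropy a n \<ge> 1/6" by (rule nonregular_lb[OF assms False])
  then show ?thesis using False by auto
qed

end
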